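(* Assume $m\ge k+1$ and let $\tilde G_{k+1}(\Omega)=\big(-\Delta^\eta_\Omega+\bar\mu_k+a_{k+1}L^{-2}Q_{\Omega,k+1}^*Q_{\Omega,k+1}\big)^{-1}$. There exist constants $c>0,c_1>0$ depending only on $d$ and $a$ (independent of $k,m,L,\bar\mu_0$) such that for all $w,w'\in\Omega_{k+1}$ and $f,f'\in\mathcal L^2(\Omega)$ with $\mathrm{supp} f\subset B_{k+1}(w)$, $\mathrm{supp} f'\subset B_{k+1}(w')$, $$|\langle f,\tilde G_{k+1}(\Omega)f'\rangle|\le c\,L^2\,e^{-c_1 L^{-1}|w-w'|}\,\|f\|_2\|f'\|_2 .$$
   Context: Standing setup. Fix an integer $d\ge1$, an odd integer $L>1$, integers $k\ge1$, $m\ge k$, and set $\eta=L^{-k}$. Let $\Omega=\eta\{0,1,\dots,L^m-1\}^d$ and, for $0\le j\le m$, $\Omega_j=(L^j\eta)\{0,1,\dots,L^{m-j}-1\}^d$. $\mathcal L^2(\Omega)$: complex functions with $\langle f,g\rangle=\eta^d\sum_{x\in\Omega}\overline{f(x)}g(x)$; $\mathcal L^2(\Omega_j)$ with $(L^j\eta)^d\sum_{y\in\Omega_j}$. For $y\in (L^j\eta)\mathbb Z^d$, $B_j(y)=\{x\in\eta\mathbb Z^d:\ y_\mu\le x_\mu<y_\mu+L^j\eta\ \forall\mu\}$. Averaging operator $(Q_{\Omega,j}f)(y)=L^{-jd}\sum_{x\in B_j(y)}f(x)$, $y\in\Omega_j$, with adjoint $(Q_{\Omega,j}^*h)(x)=h(y_x)$,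 $x\in B_j(y_x)$. Neumann Laplacian $(\Delta^\eta_\Omega f)(x)=\eta^{-2}\sum_{\mu}(f(x+\eta e_\mu)-2f(x)+f(x-\eta e_\mu))$, where $f(x\pm\eta e_\mu)$ is replaced by $f(x)$ if $x\pm\eta e_\mu\notin\Omega$. Fix $a\in(0,1]$, $a_j=a\frac{1-L^{-2}}{1-L^{-2j}}$, $\bar\mu_0\ge0$, $\bar\mu_j=L^{2j}\bar\mu_0$. *)

theory Defs
  imports Complex_Main
begin

text \<open>Lattice points x = s * n are encoded by their integer coordinate vectors
  n :: nat \<Rightarrow> int (coordinates mu < d, zero beyond d).
  grid d N = {0,...,N-1}^d.  Omega = eta * grid d (L^m), Omega_j = (L^j eta) * grid d (L^(m-j)).\<close>

definition grid :: "nat \<Rightarrow> nat \<Rightarrow> (nat \<Rightarrow> int) set" where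
  "grid d N = {n. (\<forall>\<mu><d. 0 \<le> n \<mu> \<and> n \<mu> < int N) \<and> (\<forall>\<mu>. d \<le> \<mu> \<longrightarrow> n \<mu> = 0)}"

text \<open>B_j(y) for y = (L^j eta) * j0, as a set of fine coordinates (x = eta * n); s = L^j.\<close>
definition block :: "nat \<Rightarrow> int \<Rightarrow> (nat \<Rightarrow> int) \<Rightarrow> (nat \<Rightarrow> int) set" where
  "block d s y = {n. (\<forall>\<mu><d. s * y \<mu> \<le> n \<mu> \<and> n \<mu> < s * y \<mu> + s) \<and> (\<forall>\<mu>. d \<le> \<mu> \<longrightarrow> n \<mu> = 0)}"

definition inner_L2 :: "nat \<Rightarrow> real \<Rightarrow> (nat \<Rightarrow> int) set \<Rightarrow> ((nat \<Rightarrow> int) \<Rightarrow> complex)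
    \<Rightarrow> ((nat \<Rightarrow> int) \<Rightarrow> complex) \<Rightarrow> complex" where
  "inner_L2 d eta Om f g = complex_of_real (eta ^ d) * (\<Sum>x\<in>Om. cnj (f x) * g x)"

definition norm_L2 :: "nat \<Rightarrow> real \<Rightarrow> (nat \<Rightarrow> int) set \<Rightarrow> ((nat \<Rightarrow> int) \<Rightarrow> complex) \<Rightarrow> real" where
  "norm_L2 d eta Om f = sqrt (eta ^ d * (\<Sum>x\<in>Om. (cmod (f x))\<^sup>2))"

definition nbr :: "(nat \<Rightarrow> int) set \<Rightarrow> (nat \<Rightarrow> int) \<Rightarrow> nat \<Rightarrow> int \<Rightarrow> (nat \<Rightarrow> int)" where
  "nbr Om x \<mu> s = (if x(\<mu> := x \<mu> + s) \<in> Om then x(\<mu> := x \<mu> + s) else x)"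

definition neumann_lap :: "nat \<Rightarrow> real \<Rightarrow> (nat \<Rightarrow> int) set \<Rightarrow> ((nat \<Rightarrow> int) \<Rightarrow> complex)
    \<Rightarrow> (nat \<Rightarrow> int) \<Rightarrow> complex" where
  "neumann_lap d eta Om f x = complex_of_real (1 / eta ^ 2) *
     (\<Sum>\<mu><d. f (nbr Om x \<mu> 1) - 2 * f x + f (nbr Om x \<mu> (-1)))"

definition Qavg :: "nat \<Rightarrow> nat \<Rightarrow> nat \<Rightarrow> ((nat \<Rightarrow> int) \<Rightarrow> complex) \<Rightarrow> (nat \<Rightarrow> int) \<Rightarrow> complex" where
  "Qavg d L j f y = complex_of_real (1 / real L ^ (j * d)) * (\<Sum>x\<in>block d (int (L ^ j)) y. f x)"

definition Qadj :: "nat \<Rightarrow> nat \<Rightarrow> ((nat \<Rightarrow> int) \<Rightarrow> complex) \<Rightarrow> (nat \<Rightarrow> int) \<Rightarrow> complex" where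
  "Qadj L j h x = h (\<lambda>\<mu>. x \<mu> div int (L ^ j))"

definition a_seq :: "real \<Rightarrow> nat \<Rightarrow> nat \<Rightarrow> real" where
  "a_seq a L j = a * (1 - real L powr (-2)) / (1 - real L powr (- 2 * real j))"

definition mu_bar :: "real \<Rightarrow> nat \<Rightarrow> nat \<Rightarrow> real" where
  "mu_bar mu0 L j = real L ^ (2 * j) * mu0"

text \<open>The operator -Delta + mu_k + a_{k+1} L^{-2} Q*_{k+1} Q_{k+1} on L^2(Omega),
  functions on Omega being represented as functions vanishing off Omega.\<close>
definition Hop :: "nat \<Rightarrow> nat \<Rightarrow> nat \<Rightarrow> nat \<Rightarrow> real \<Rightarrow> real \<Rightarrow>
    ((nat \<Rightarrow> int) \<Rightarrow> complex) \<Rightarrow> (nat \<Rightarrow> int) \<Rightarrow> complex" where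
  "Hop d L k m a mu0 f x =
    (let eta = 1 / real L ^ k; Om = grid d (L ^ m) in
     if x \<in> Om then
       - neumann_lap d eta Om f x + complex_of_real (mu_bar mu0 L k) * f x
       + complex_of_real (a_seq a L (k + 1) / (real L)\<^sup>2) * Qadj L (k + 1) (Qavg d L (k + 1) f) x
     else 0)"

definition Gtilde :: "nat \<Rightarrow> nat \<Rightarrow> nat \<Rightarrow> nat \<Rightarrow> real \<Rightarrow> real \<Rightarrow>
    ((nat \<Rightarrow> int) \<Rightarrow> complex) \<Rightarrow> (nat \<Rightarrow> int) \<Rightarrow> complex" where
  "Gtilde d L k m a mu0 =
     inv_into {f. \<forall>x. x \<notin> grid d (L ^ m) \<longrightarrow> f x = 0} (Hop d L k m a mu0)"

end

theory Submission
  imports Defs "HOL-Analysis.Analysis" "HOL-Library.Function_Algebras"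
begin


definition cube :: "nat set \<Rightarrow> (nat\<Rightarrow>int) \<Rightarrow> nat \<Rightarrow> (nat\<Rightarrow>int) set" where
 "cube D b N = {n. (\<forall>\<mu>\<in>D. b \<mu> \<le> n \<mu> \<and> n \<mu> < b \<mu> + int N) \<and> (\<forall>\<mu>. \<mu> \<notin> D \<longrightarrow> n \<mu> = b \<mu>)}"

lemma cube_empty: "cube {} b N = {b}" by (auto simp: cube_def)

lemma cube_insert_slices: assumes "j \<notin> D"
 shows "cube (insert j D) b N = (\<Union>t\<in>{b j..<b j + int N}. cube D (b(j:=t)) N)"
proof (intro equalityI subsetI)
  fix n assume "n \<in> cube (insert j D) b N"
  then show "n \<in> (\<Union>t\<in>{b j..<b j + int N}. cube D (b(j:=t)) N)"
    using assms by (auto simp: cube_def intro!: bexI[of _ "n j"])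
next
  fix n assume "n \<in> (\<Union>t\<in>{b j..<b j + int N}. cube D (b(j:=t)) N)"
  then show "n \<in> cube (insert j D) b N" using assms by (auto simp: cube_def split: if_splits)
qed

lemma cube_slice_j: "j \<notin> D \<Longrightarrow> z \<in> cube D b N \<Longrightarrow> z j = b j"
  by (auto simp: cube_def)

lemma finite_cube: "finite D \<Longrightarrow> finite (cube D b N)"
proof (induction D arbitrary: b rule: finite_induct)
  case empty then show ?case by (simp add: cube_empty)
next
  case (insert j D) then show ?case by (simp add: cube_insert_slices)
qed

lemma sum_cube_insert: assumes "j \<notin> D" "finite D"
  shows "(\<Sum>z\<in>cube (insert j D) b N. F z) = (\<Sum>t\<in>{b j..<b j+int N}. \<Sum>z\<in>cube D (b(j:=t)) N. F z)"
  unfolding cube_insert_slices[OF assms(1)]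
proof (rule sum.UNION_disjoint)
  show "\<forall>i\<in>{b j..<b j + int N}. \<forall>k\<in>{b j..<b j + int N}. i \<noteq> k \<longrightarrow> cube D (b(j := i)) N \<inter> cube D (b(j := k)) N = {}"
    using assms(1) by (auto simp: cube_def)
qed (auto simp: finite_cube assms)

lemma card_cube: "finite D \<Longrightarrow> card (cube D b N) = N ^ card D"
proof (induction D arbitrary: b rule: finite_induct)
  case empty then show ?case by (simp add: cube_empty)
next
  case (insert j D)
  have "card (cube (insert j D) b N) = (\<Sum>z\<in>cube (insert j D) b N. 1)" by simp
  also have "\<dots> = (\<Sum>t\<in>{b j..<b j+int N}. \<Sum>z\<in>cube D (b(j:=t)) N. (1::nat))"
    by (rule sum_cube_insert) (use insert in auto)
  also have "\<dots> = (\<Sum>t\<in>{b j..<b j+int N}. N ^ card D)" using insert by simp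
  finally show ?case using insert by simp
qed

lemma slice_shift: assumes "j \<notin> D"
  shows "(\<Sum>z\<in>cube D (b(j:=t)) N. F z) = (\<Sum>v\<in>cube D b N. F (v(j:=t)))"
proof (rule sum.reindex_bij_witness[of _ "\<lambda>v. v(j:=t)" "\<lambda>z. z(j:= b j)"])
  fix z assume z: "z \<in> cube D (b(j:=t)) N"
  then have "z j = t" using cube_slice_j[OF assms z] by simp
  then show "z(j := b j, j := t) = z" by auto
  show "z(j := b j) \<in> cube D b N" using z assms by (auto simp: cube_def)
next
  fix v assume v: "v \<in> cube D b N"
  then have "v j = b j" using cube_slice_j[OF assms v] by simp
  then show "v(j := t, j := b j) = v" by auto
  show "v(j := t) \<in> cube D (b(j:=t)) N" using v assms by (auto simp: cube_def)
next
  fix a assume "a \<in> cube D (b(j:=t)) N"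
  then have "a j = t" using cube_slice_j[OF assms, of a "b(j:=t)"] by simp
  then show "F (a(j := b j, j:=t)) = F a" by (simp add: fun_upd_idem)
qed

lemma sum_cube_lines: assumes "j \<notin> D" "finite D"
  shows "(\<Sum>z\<in>cube (insert j D) b N. F z) = (\<Sum>v\<in>cube D b N. \<Sum>t\<in>{b j..<b j+int N}. F (v(j:=t)))"
  unfolding sum_cube_insert[OF assms] slice_shift[OF assms(1)] by (rule sum.swap)

definition E1 :: "(int\<Rightarrow>complex) \<Rightarrow> int \<Rightarrow> nat \<Rightarrow> real" where
 "E1 g lo N = (\<Sum>t\<in>{lo..<lo+int N}. if t+1 < lo + int N then (cmod (g t - g (t+1)))\<^sup>2 else 0)"

definition Eng :: "nat set \<Rightarrow> (nat\<Rightarrow>int) \<Rightarrow> nat \<Rightarrow> ((nat\<Rightarrow>int)\<Rightarrow>complex) \<Rightarrow> real" where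
 "Eng D b N h = (\<Sum>\<mu>\<in>D. \<Sum>z\<in>cube D b N. if z \<mu> + 1 < b \<mu> + int N then (cmod (h z - h (z(\<mu> := z \<mu> + 1))))\<^sup>2 else 0)"

lemma Eng_insert: assumes "j \<notin> D" "finite D"
  shows "Eng (insert j D) b N h = (\<Sum>t\<in>{b j..<b j+int N}. Eng D (b(j:=t)) N h)
     + (\<Sum>v\<in>cube D b N. E1 (\<lambda>s. h (v(j:=s))) (b j) N)"
proof -
  have 1: "(\<Sum>z\<in>cube (insert j D) b N. if z j + 1 < b j + int N then (cmod (h z - h (z(j := z j + 1))))\<^sup>2 else 0)
     = (\<Sum>v\<in>cube D b N. E1 (\<lambda>s. h (v(j:=s))) (b j) N)"
    unfolding sum_cube_lines[OF assms] E1_def by (intro sum.cong refl) simp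
  have 2: "(\<Sum>\<mu>\<in>D. \<Sum>z\<in>cube (insert j D) b N. if z \<mu> + 1 < b \<mu> + int N then (cmod (h z - h (z(\<mu> := z \<mu> + 1))))\<^sup>2 else 0)
     = (\<Sum>t\<in>{b j..<b j+int N}. Eng D (b(j:=t)) N h)"
  proof -
    have "(\<Sum>\<mu>\<in>D. \<Sum>z\<in>cube (insert j D) b N. if z \<mu> + 1 < b \<mu> + int N then (cmod (h z - h (z(\<mu> := z \<mu> + 1))))\<^sup>2 else 0)
       = (\<Sum>\<mu>\<in>D. \<Sum>t\<in>{b j..<b j+int N}. \<Sum>z\<in>cube D (b(j:=t)) N. if z \<mu> + 1 < (b(j:=t)) \<mu> + int N then (cmod (h z - h (z(\<mu> := z \<mu> + 1))))\<^sup>2 else 0)"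
      unfolding sum_cube_insert[OF assms]
      by (intro sum.cong refl) (use assms(1) in auto)
    also have "\<dots> = (\<Sum>t\<in>{b j..<b j+int N}. Eng D (b(j:=t)) N h)"
      unfolding Eng_def by (rule sum.swap)
    finally show ?thesis .
  qed
  show ?thesis unfolding Eng_def[of "insert j D"] using assms 1 2 by (simp add: sum.insert)
qed

lemma sq_tri: "(cmod (u - w))\<^sup>2 \<le> 2 * (cmod (u - v))\<^sup>2 + 2 * (cmod (v - w))\<^sup>2"
proof -
  have "cmod (u - w) \<le> cmod (u - v) + cmod (v - w)" by (metis norm_diff_triangle_ineq diff_add_cancel add_diff_eq norm_triangle_ineq4 norm_diff_triangle_le order_refl)
  then have "(cmod (u - w))\<^sup>2 \<le> (cmod (u - v) + cmod (v - w))\<^sup>2" by (simp add: power_mono)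
  also have "\<dots> \<le> 2 * (cmod (u - v))\<^sup>2 + 2 * (cmod (v - w))\<^sup>2"
    using zero_le_power2[of "cmod (u - v) - cmod (v - w)"] unfolding power2_eq_square by (simp add: algebra_simps)
  finally show ?thesis .
qed

lemma cs_count: "(\<Sum>i\<in>I. x i :: real)\<^sup>2 \<le> real (card I) * (\<Sum>i\<in>I. (x i)\<^sup>2)"
  using Cauchy_Schwarz_ineq_sum[of "\<lambda>i. x i" "\<lambda>_. 1" I] by (simp add: mult.commute)

lemma pair1d_aux: assumes "s \<in> {lo..<lo+int N}" "t \<in> {lo..<lo+int N}" "s \<le> t"
  shows "(cmod (g t - g s))\<^sup>2 \<le> real N * E1 g lo N"
proof -
  define n where "n = nat (t - s)"
  have tn: "t = s + int n" using assms n_def by simp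
  have nN: "n \<le> N" using assms n_def by auto
  let ?a = "\<lambda>i. g (s + int i + 1) - g (s + int i)"
  have "(\<Sum>i<n. ?a i) = g (s + int n) - g s"
    using sum_lessThan_telescope[of "\<lambda>i. g (s + int i)" n] by (simp add: ac_simps)
  then have tel: "g t - g s = (\<Sum>i<n. ?a i)" using tn by simp
  have "cmod (g t - g s) \<le> (\<Sum>i<n. cmod (?a i))" unfolding tel by (rule norm_sum)
  then have "(cmod (g t - g s))\<^sup>2 \<le> (\<Sum>i<n. cmod (?a i))\<^sup>2" by (simp add: power_mono)
  also have "\<dots> \<le> real n * (\<Sum>i<n. (cmod (?a i))\<^sup>2)" using cs_count[of "\<lambda>i. cmod (?a i)" "{..<n}"] by simp
  also have "(\<Sum>i<n. (cmod (?a i))\<^sup>2) \<le> E1 g lo N"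
  proof -
    have "(\<Sum>i<n. (cmod (?a i))\<^sup>2) = (\<Sum>i<n. (\<lambda>u. if u+1 < lo + int N then (cmod (g u - g (u+1)))\<^sup>2 else 0) (s + int i))"
    proof (intro sum.cong refl)
      fix i assume "i \<in> {..<n}"
      then have "s + int i + 1 < lo + int N" using assms tn by auto
      then show "(cmod (?a i))\<^sup>2 = (\<lambda>u. if u+1 < lo + int N then (cmod (g u - g (u+1)))\<^sup>2 else 0) (s + int i)"
        by (simp add: norm_minus_commute)
    qed
    also have "\<dots> = (\<Sum>u\<in>(\<lambda>i. s + int i) ` {..<n}. if u+1 < lo + int N then (cmod (g u - g (u+1)))\<^sup>2 else 0)"
      by (rule sum.reindex[symmetric, unfolded comp_def]) (simp add: inj_on_def)
    also have "\<dots> \<le> E1 g lo N" unfolding E1_def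
      by (rule sum_mono2) (use assms tn in auto)
    finally show ?thesis .
  qed
  then have "real n * (\<Sum>i<n. (cmod (?a i))\<^sup>2) \<le> real N * E1 g lo N"
    using nN by (intro mult_mono) (auto simp: E1_def intro!: sum_nonneg)
  finally show ?thesis by simp
qed

lemma pair1d: assumes "s \<in> {lo..<lo+int N}" "t \<in> {lo..<lo+int N}"
  shows "(cmod (g s - g t))\<^sup>2 \<le> real N * E1 g lo N"
proof (cases "s \<le> t")
  case True then show ?thesis using pair1d_aux[OF assms True] by (simp add: norm_minus_commute)
next
  case False then show ?thesis using pair1d_aux[OF assms(2,1)] by simp
qed

lemma poinc1d: "(\<Sum>s\<in>{lo..<lo+int N}. \<Sum>t\<in>{lo..<lo+int N}. (cmod (g s - g t))\<^sup>2) \<le> real N ^ 3 * E1 g lo N"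
proof -
  have "(\<Sum>s\<in>{lo..<lo+int N}. \<Sum>t\<in>{lo..<lo+int N}. (cmod (g s - g t))\<^sup>2)
     \<le> (\<Sum>s\<in>{lo..<lo+int N}. \<Sum>t\<in>{lo..<lo+int N}. real N * E1 g lo N)"
    by (intro sum_mono pair1d)
  also have "\<dots> = real N ^ 3 * E1 g lo N" by (simp add: power3_eq_cube)
  finally show ?thesis .
qed


lemma slice_move: assumes "j \<notin> D"
  shows "(\<Sum>y\<in>cube D (b(j:=t)) N. G (y(j:=s))) = (\<Sum>y\<in>cube D (b(j:=s)) N. G y)"
  by (simp add: slice_shift[OF assms])

lemma E1_nonneg: "E1 g lo N \<ge> 0" unfolding E1_def by (intro sum_nonneg) auto
lemma Eng_nonneg: "Eng D b N h \<ge> 0" unfolding Eng_def by (intro sum_nonneg) auto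

lemma poinc: "finite D \<Longrightarrow> (\<Sum>x\<in>cube D b N. \<Sum>y\<in>cube D b N. (cmod (h x - h y))\<^sup>2)
   \<le> 2 ^ card D * real N ^ (card D + 2) * Eng D b N h"
proof (induction D arbitrary: b rule: finite_induct)
  case empty then show ?case by (simp add: cube_empty Eng_def)
next
  case (insert j D)
  note hyp = insert(1,2)
  define T where "T = {b j..<b j + int N}"
  define C where "C = (\<lambda>s. cube D (b(j:=s)) N)"
  define C0 where "C0 = cube D b N"
  define d where "d = card D"
  have cT: "card T = N" unfolding T_def by simp
  have cC: "\<And>s. card (C s) = N ^ d" unfolding C_def d_def using card_cube[OF hyp(1)] by simp
  have IH: "\<And>s. (\<Sum>x\<in>C s. \<Sum>y\<in>C s. (cmod (h x - h y))\<^sup>2) \<le> 2 ^ d * real N ^ (d + 2) * Eng D (b(j:=s)) N h"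
    unfolding C_def d_def by (rule insert.IH)
  have "(\<Sum>x\<in>cube (insert j D) b N. \<Sum>y\<in>cube (insert j D) b N. (cmod (h x - h y))\<^sup>2)
      = (\<Sum>s\<in>T. \<Sum>x\<in>C s. \<Sum>t\<in>T. \<Sum>y\<in>C t. (cmod (h x - h y))\<^sup>2)"
    unfolding T_def C_def by (simp add: sum_cube_insert[OF hyp(2,1)])
  also have "\<dots> \<le> (\<Sum>s\<in>T. \<Sum>x\<in>C s. \<Sum>t\<in>T. \<Sum>y\<in>C t.
       2 * (cmod (h x - h (y(j:=s))))\<^sup>2 + 2 * (cmod (h (y(j:=s)) - h y))\<^sup>2)"
    by (intro sum_mono sq_tri)
  also have "\<dots> = (\<Sum>s\<in>T. \<Sum>x\<in>C s. \<Sum>t\<in>T. \<Sum>y\<in>C t. 2 * (cmod (h x - h (y(j:=s))))\<^sup>2)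
     + (\<Sum>s\<in>T. \<Sum>x\<in>C s. \<Sum>t\<in>T. \<Sum>y\<in>C t. 2 * (cmod (h (y(j:=s)) - h y))\<^sup>2)"
    by (simp only: sum.distrib)
  also have "(\<Sum>s\<in>T. \<Sum>x\<in>C s. \<Sum>t\<in>T. \<Sum>y\<in>C t. 2 * (cmod (h x - h (y(j:=s))))\<^sup>2)
      = (\<Sum>s\<in>T. real N * (2 * (\<Sum>x\<in>C s. \<Sum>y\<in>C s. (cmod (h x - h y))\<^sup>2)))"
  proof -
    have "\<And>s x t. (\<Sum>y\<in>C t. 2 * (cmod (h x - h (y(j:=s))))\<^sup>2) = (\<Sum>y\<in>C s. 2 * (cmod (h x - h y))\<^sup>2)"
      unfolding C_def by (rule slice_move[OF hyp(2)])
    then show ?thesis using cT by (simp add: sum_distrib_left[symmetric])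
  qed
  also have "\<dots> \<le> (\<Sum>s\<in>T. real N * (2 * (2 ^ d * real N ^ (d + 2) * Eng D (b(j:=s)) N h)))"
    by (intro sum_mono mult_left_mono IH) auto
  also have "(\<Sum>s\<in>T. \<Sum>x\<in>C s. \<Sum>t\<in>T. \<Sum>y\<in>C t. 2 * (cmod (h (y(j:=s)) - h y))\<^sup>2)
      = (\<Sum>s\<in>T. real N ^ d * (\<Sum>v\<in>C0. \<Sum>t\<in>T. 2 * (cmod (h (v(j:=s)) - h (v(j:=t))))\<^sup>2))"
  proof -
    have "\<And>s. (\<Sum>t\<in>T. \<Sum>y\<in>C t. 2 * (cmod (h (y(j:=s)) - h y))\<^sup>2)
        = (\<Sum>v\<in>C0. \<Sum>t\<in>T. 2 * (cmod (h (v(j:=s)) - h (v(j:=t))))\<^sup>2)"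
    proof -
      fix s
      have "(\<Sum>t\<in>T. \<Sum>y\<in>C t. 2 * (cmod (h (y(j:=s)) - h y))\<^sup>2)
          = (\<Sum>y\<in>cube (insert j D) b N. 2 * (cmod (h (y(j:=s)) - h y))\<^sup>2)"
        unfolding T_def C_def by (rule sum_cube_insert[OF hyp(2,1), symmetric])
      also have "\<dots> = (\<Sum>v\<in>C0. \<Sum>t\<in>T. 2 * (cmod (h (v(j:=s)) - h (v(j:=t))))\<^sup>2)"
        unfolding T_def C0_def by (simp add: sum_cube_lines[OF hyp(2,1)])
      finally show "(\<Sum>t\<in>T. \<Sum>y\<in>C t. 2 * (cmod (h (y(j:=s)) - h y))\<^sup>2)
        = (\<Sum>v\<in>C0. \<Sum>t\<in>T. 2 * (cmod (h (v(j:=s)) - h (v(j:=t))))\<^sup>2)" .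
    qed
    then show ?thesis using cC by simp
  qed
  also have "\<dots> = real N ^ d * 2 * (\<Sum>v\<in>C0. \<Sum>s\<in>T. \<Sum>t\<in>T. (cmod (h (v(j:=s)) - h (v(j:=t))))\<^sup>2)"
    by (simp add: sum_distrib_left[symmetric] sum.swap[of _ T C0])
  also have "\<dots> \<le> real N ^ d * 2 * (\<Sum>v\<in>C0. real N ^ 3 * E1 (\<lambda>s. h (v(j:=s))) (b j) N)"
    unfolding T_def by (intro mult_left_mono sum_mono poinc1d) auto
  finally have *: "(\<Sum>x\<in>cube (insert j D) b N. \<Sum>y\<in>cube (insert j D) b N. (cmod (h x - h y))\<^sup>2)
     \<le> 2 ^ (d+1) * real N ^ (d + 3) * (\<Sum>s\<in>T. Eng D (b(j:=s)) N h)
      + 2 * real N ^ (d+3) * (\<Sum>v\<in>C0. E1 (\<lambda>s. h (v(j:=s))) (b j) N)"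
    by (simp add: sum_distrib_left[symmetric] power_add power3_eq_cube algebra_simps fun_upd_def)
  have "2 * real N ^ (d+3) * (\<Sum>v\<in>C0. E1 (\<lambda>s. h (v(j:=s))) (b j) N)
      \<le> 2 ^ (d+1) * real N ^ (d + 3) * (\<Sum>v\<in>C0. E1 (\<lambda>s. h (v(j:=s))) (b j) N)"
  proof -
    have "(2::real) ^ 1 \<le> 2 ^ (d+1)" by (intro power_increasing) auto
    then have "2 * real N ^ (d+3) \<le> 2 ^ (d+1) * real N ^ (d+3)" by (intro mult_right_mono) auto
    moreover have "0 \<le> (\<Sum>v\<in>C0. E1 (\<lambda>s. h (v(j:=s))) (b j) N)" by (intro sum_nonneg E1_nonneg)
    ultimately show ?thesis by (rule mult_right_mono)
  qed
  with * have "(\<Sum>x\<in>cube (insert j D) b N. \<Sum>y\<in>cube (insert j D) b N. (cmod (h x - h y))\<^sup>2)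
     \<le> 2 ^ (d+1) * real N ^ (d + 3) * ((\<Sum>s\<in>T. Eng D (b(j:=s)) N h) + (\<Sum>v\<in>C0. E1 (\<lambda>s. h (v(j:=s))) (b j) N))"
    by (simp add: algebra_simps)
  also have "\<dots> = 2 ^ card (insert j D) * real N ^ (card (insert j D) + 2) * Eng (insert j D) b N h"
    unfolding Eng_insert[OF hyp(2,1)] T_def C0_def d_def using hyp by (simp add: power_add power3_eq_cube)
  finally show ?case .
qed


lemma cmod_diff_sq: "(cmod (u - v))\<^sup>2 = (cmod u)\<^sup>2 + (cmod v)\<^sup>2 - 2 * Re (cnj u * v)"
  unfolding cmod_power2 by (simp add: power2_eq_square algebra_simps)

lemma cmod_sq_Re: "(cmod u)\<^sup>2 = Re (cnj u * u)"
  unfolding cmod_power2 by (simp add: power2_eq_square)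

lemma div_block: "0 < (N::int) \<Longrightarrow> N*w \<le> x \<Longrightarrow> x < N*w + N \<Longrightarrow> x div N = w"
  using int_div_pos_eq[of x N w "x - N*w"] by simp

lemma div_bounds: "0 < (N::int) \<Longrightarrow> N * (x div N) \<le> x \<and> x < N * (x div N) + N"
  using mult_div_mod_eq[of N x] pos_mod_sign[of N x] pos_mod_bound[of N x] by linarith

lemma double_sum_id: assumes "finite A"
  shows "(\<Sum>x\<in>A. \<Sum>y\<in>A. (cmod (h x - h y))\<^sup>2)
    = 2 * real (card A) * (\<Sum>x\<in>A. (cmod (h x))\<^sup>2) - 2 * (cmod (\<Sum>x\<in>A. h x))\<^sup>2"
proof -
  have "cnj (\<Sum>x\<in>A. h x) * (\<Sum>x\<in>A. h x) = (\<Sum>x\<in>A. \<Sum>y\<in>A. cnj (h x) * h y)"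
    by (simp add: cnj_sum sum_product)
  then have "(\<Sum>x\<in>A. \<Sum>y\<in>A. Re (cnj (h x) * h y)) = Re (cnj (\<Sum>x\<in>A. h x) * (\<Sum>x\<in>A. h x))"
    by (simp add: Re_sum)
  then have e: "(\<Sum>x\<in>A. \<Sum>y\<in>A. Re (cnj (h x) * h y)) = (cmod (\<Sum>x\<in>A. h x))\<^sup>2"
    by (simp add: cmod_sq_Re)
  define q where "q = (\<lambda>x. (cmod (h x))\<^sup>2)"
  define r where "r = (\<lambda>x y. Re (cnj (h x) * h y))"
  have "(\<Sum>x\<in>A. \<Sum>y\<in>A. (cmod (h x - h y))\<^sup>2) = (\<Sum>x\<in>A. \<Sum>y\<in>A. q x + q y - 2 * r x y)"
    unfolding q_def r_def by (simp only: cmod_diff_sq)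
  also have "\<dots> = 2 * real (card A) * (\<Sum>x\<in>A. q x) - 2 * (\<Sum>x\<in>A. \<Sum>y\<in>A. r x y)"
    by (simp add: sum.distrib sum_subtractf sum_distrib_left[symmetric] sum_distrib_right[symmetric] algebra_simps)
  finally have "(\<Sum>x\<in>A. \<Sum>y\<in>A. (cmod (h x - h y))\<^sup>2) = 2 * real (card A) * (\<Sum>x\<in>A. (cmod (h x))\<^sup>2) - 2 * (\<Sum>x\<in>A. \<Sum>y\<in>A. Re (cnj (h x) * h y))"
    unfolding q_def r_def .
  then show ?thesis using e by simp
qed

lemma var_cube: assumes "finite D" "N > 0"
  shows "(\<Sum>x\<in>cube D b N. (cmod (h x))\<^sup>2)
     \<le> 2 ^ card D * real N ^ 2 * Eng D b N h + (cmod (\<Sum>x\<in>cube D b N. h x))\<^sup>2 / real N ^ card D"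
proof -
  let ?C = "cube D b N" let ?d = "card D"
  have c: "real (card ?C) = real N ^ ?d" using card_cube[OF assms(1)] by simp
  have "2 * real N ^ ?d * (\<Sum>x\<in>?C. (cmod (h x))\<^sup>2) - 2 * (cmod (\<Sum>x\<in>?C. h x))\<^sup>2
      \<le> 2 ^ ?d * real N ^ (?d + 2) * Eng D b N h"
    using poinc[OF assms(1), where b=b and N=N and h=h] double_sum_id[OF finite_cube[OF assms(1)], where h=h] c by simp
  then have "real N ^ ?d * (\<Sum>x\<in>?C. (cmod (h x))\<^sup>2)
      \<le> real N ^ ?d * (2 ^ ?d * real N ^ 2 * Eng D b N h) + (cmod (\<Sum>x\<in>?C. h x))\<^sup>2"
  proof -
    assume h: "2 * real N ^ ?d * (\<Sum>x\<in>?C. (cmod (h x))\<^sup>2) - 2 * (cmod (\<Sum>x\<in>?C. h x))\<^sup>2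
      \<le> 2 ^ ?d * real N ^ (?d + 2) * Eng D b N h"
    have e: "2 ^ ?d * real N ^ (?d + 2) * Eng D b N h = real N ^ ?d * (2 ^ ?d * real N ^ 2 * Eng D b N h)"
      by (simp add: power_add power2_eq_square algebra_simps)
    have "0 \<le> real N ^ ?d * (2 ^ ?d * real N ^ 2 * Eng D b N h)"
      using Eng_nonneg[of D b N h] by simp
    then have "2 ^ ?d * real N ^ (?d + 2) * Eng D b N h \<le> 2 * (real N ^ ?d * (2 ^ ?d * real N ^ 2 * Eng D b N h))"
      unfolding e by linarith
    with h show ?thesis by linarith
  qed
  moreover have "0 < real N ^ ?d" using assms by simp
  ultimately show ?thesis by (simp add: field_simps)
qed

lemma grid_cube: "grid d M = cube {..<d} (\<lambda>_. 0) M"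
  by (auto simp: grid_def cube_def)

lemma block_cube: assumes "\<forall>\<mu>. d \<le> \<mu> \<longrightarrow> w \<mu> = 0"
  shows "block d (int N) w = cube {..<d} (\<lambda>\<mu>. int N * w \<mu>) N"
  using assms by (auto simp: block_def cube_def)

lemma grid_zero: "w \<in> grid d M \<Longrightarrow> d \<le> \<mu> \<Longrightarrow> w \<mu> = 0" by (auto simp: grid_def)

lemma finite_grid: "finite (grid d M)" by (simp add: grid_cube finite_cube)

definition bidx :: "nat \<Rightarrow> (nat \<Rightarrow> int) \<Rightarrow> (nat \<Rightarrow> int)" where
  "bidx N x = (\<lambda>\<mu>. x \<mu> div int N)"

lemma grid_partition: assumes "N > 0"
  shows "grid d (N * M) = (\<Union>w\<in>grid d M. block d (int N) w)"
proof (intro equalityI subsetI)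
  fix x assume x: "x \<in> grid d (N * M)"
  have "bidx N x \<in> grid d M"
  proof -
    have "\<And>\<mu>. \<mu> < d \<Longrightarrow> 0 \<le> x \<mu> div int N \<and> x \<mu> div int N < int M"
    proof -
      fix \<mu> assume "\<mu> < d"
      then have "0 \<le> x \<mu>" "x \<mu> < int N * int M" using x by (auto simp: grid_def)
      moreover have "x \<mu> div int N < int M"
      proof (rule ccontr)
        assume "\<not> x \<mu> div int N < int M"
        then have "int N * int M \<le> int N * (x \<mu> div int N)" by (intro mult_left_mono) auto
        moreover have "int N * (x \<mu> div int N) \<le> x \<mu>" using div_bounds[of "int N" "x \<mu>"] assms by simp
        ultimately show False using \<open>x \<mu> < int N * int M\<close> by linarith
      qed
      ultimately show "0 \<le> x \<mu> div int N \<and> x \<mu> div int N < int M" using assms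
        by (simp add: pos_imp_zdiv_nonneg_iff)
    qed
    then show ?thesis using x by (auto simp: grid_def bidx_def)
  qed
  moreover have "x \<in> block d (int N) (bidx N x)"
  proof -
    have "\<And>\<mu>. int N * (x \<mu> div int N) \<le> x \<mu> \<and> x \<mu> < int N * (x \<mu> div int N) + int N"
      using assms div_bounds[of "int N"] by simp
    then show ?thesis using x by (auto simp: block_def bidx_def grid_def)
  qed
  ultimately show "x \<in> (\<Union>w\<in>grid d M. block d (int N) w)" by blast
next
  fix x assume "x \<in> (\<Union>w\<in>grid d M. block d (int N) w)"
  then obtain w where w: "w \<in> grid d M" "x \<in> block d (int N) w" by blast
  have "\<And>\<mu>. \<mu> < d \<Longrightarrow> 0 \<le> x \<mu> \<and> x \<mu> < int (N * M)"
  proof -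
    fix \<mu> assume m: "\<mu> < d"
    then have a: "0 \<le> w \<mu>" "w \<mu> + 1 \<le> int M" using w by (auto simp: grid_def)
    have b: "int N * w \<mu> \<le> x \<mu>" "x \<mu> < int N * w \<mu> + int N" using w m by (auto simp: block_def)
    have "int N * (w \<mu> + 1) \<le> int N * int M" using a by (intro mult_left_mono) auto
    then show "0 \<le> x \<mu> \<and> x \<mu> < int (N * M)" using a b by (auto simp: algebra_simps) (smt (verit) mult_nonneg_nonneg of_nat_0_le_iff)
  qed
  then show "x \<in> grid d (N * M)" using w by (auto simp: grid_def block_def)
qed

lemma block_disjoint: assumes "N > 0" "w \<in> grid d M" "w' \<in> grid d M" "w \<noteq> w'"
  shows "block d (int N) w \<inter> block d (int N) w' = {}"
proof (rule ccontr)
  assume "block d (int N) w \<inter> block d (int N) w' \<noteq> {}"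
  then obtain x where x: "x \<in> block d (int N) w" "x \<in> block d (int N) w'" by blast
  have "\<And>\<mu>. w \<mu> = w' \<mu>"
  proof -
    fix \<mu>
    show "w \<mu> = w' \<mu>"
    proof (cases "\<mu> < d")
      case True
      have "x \<mu> div int N = w \<mu>" "x \<mu> div int N = w' \<mu>" using x True assms(1)
        by (auto simp: block_def intro!: div_block)
      then show ?thesis by simp
    next
      case False then show ?thesis using assms(2,3) by (auto simp: grid_def)
    qed
  qed
  then show False using assms(4) by auto
qed


lemma grid_upd_mem: "x \<in> grid d M \<Longrightarrow> \<mu> < d \<Longrightarrow> (x(\<mu> := t) \<in> grid d M) = (0 \<le> t \<and> t < int M)"
  by (auto simp: grid_def)

lemma shift_reindex: assumes "\<mu> < d"
  shows "(\<Sum>x\<in>grid d M. if 0 < x \<mu> then F x else 0)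
       = (\<Sum>z\<in>grid d M. if z \<mu> + 1 < int M then F (z(\<mu> := z \<mu> + 1)) else 0)"
proof -
  have "(\<Sum>x\<in>grid d M. if 0 < x \<mu> then F x else 0) = (\<Sum>x\<in>{x\<in>grid d M. 0 < x \<mu>}. F x)"
    by (simp add: sum.inter_filter[OF finite_grid])
  also have "\<dots> = (\<Sum>z\<in>{z\<in>grid d M. z \<mu> + 1 < int M}. F (z(\<mu> := z \<mu> + 1)))"
  proof (rule sum.reindex_bij_witness[of _ "\<lambda>z. z(\<mu> := z \<mu> + 1)" "\<lambda>x. x(\<mu> := x \<mu> - 1)"])
    fix x assume "x \<in> {x\<in>grid d M. 0 < x \<mu>}"
    then show "x(\<mu> := x \<mu> - 1) \<in> {z\<in>grid d M. z \<mu> + 1 < int M}"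
      using assms by (auto simp: grid_def)
  next
    fix z assume "z \<in> {z\<in>grid d M. z \<mu> + 1 < int M}"
    then show "z(\<mu> := z \<mu> + 1) \<in> {x\<in>grid d M. 0 < x \<mu>}"
      using assms by (auto simp: grid_def)
  qed auto
  also have "\<dots> = (\<Sum>z\<in>grid d M. if z \<mu> + 1 < int M then F (z(\<mu> := z \<mu> + 1)) else 0)"
    by (simp add: sum.inter_filter[OF finite_grid])
  finally show ?thesis .
qed

definition LapF :: "((nat\<Rightarrow>int)\<Rightarrow>real) \<Rightarrow> ((nat\<Rightarrow>int)\<Rightarrow>complex) \<Rightarrow> (nat\<Rightarrow>int) \<Rightarrow> nat \<Rightarrow> complex" where
  "LapF \<rho> g z \<mu> = (let z' = z(\<mu> := z \<mu> + 1) in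
     complex_of_real ((\<rho> z)\<^sup>2) * cnj (g z) * (g z - g z') + complex_of_real ((\<rho> z')\<^sup>2) * cnj (g z') * (g z' - g z))"

lemma lap_identity: assumes "\<mu> < d"
  shows "(\<Sum>x\<in>grid d M. complex_of_real ((\<rho> x)\<^sup>2) * cnj (g x) *
      (2 * g x - g (nbr (grid d M) x \<mu> 1) - g (nbr (grid d M) x \<mu> (-1))))
    = (\<Sum>z\<in>grid d M. if z \<mu> + 1 < int M then LapF \<rho> g z \<mu> else 0)"
proof -
  let ?S = "grid d M"
  let ?r = "\<lambda>x. complex_of_real ((\<rho> x)\<^sup>2) * cnj (g x)"
  have split: "\<And>x. x \<in> ?S \<Longrightarrow> ?r x * (2 * g x - g (nbr ?S x \<mu> 1) - g (nbr ?S x \<mu> (-1)))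
     = (if x \<mu> + 1 < int M then ?r x * (g x - g (x(\<mu> := x \<mu> + 1))) else 0)
     + (if 0 < x \<mu> then ?r x * (g x - g (x(\<mu> := x \<mu> - 1))) else 0)"
  proof -
    fix x assume x: "x \<in> ?S"
    have a: "(x(\<mu> := x \<mu> + 1) \<in> ?S) = (x \<mu> + 1 < int M)" using grid_upd_mem[OF x assms] x assms
      by (auto simp: grid_def)
    have b: "(x(\<mu> := x \<mu> + (-1)) \<in> ?S) = (0 < x \<mu>)" using grid_upd_mem[OF x assms] x assms
      by (auto simp: grid_def)
    show "?r x * (2 * g x - g (nbr ?S x \<mu> 1) - g (nbr ?S x \<mu> (-1)))
     = (if x \<mu> + 1 < int M then ?r x * (g x - g (x(\<mu> := x \<mu> + 1))) else 0)
     + (if 0 < x \<mu> then ?r x * (g x - g (x(\<mu> := x \<mu> - 1))) else 0)"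
      unfolding nbr_def a b by (simp add: algebra_simps)
  qed
  have "(\<Sum>x\<in>?S. ?r x * (2 * g x - g (nbr ?S x \<mu> 1) - g (nbr ?S x \<mu> (-1))))
     = (\<Sum>x\<in>?S. if x \<mu> + 1 < int M then ?r x * (g x - g (x(\<mu> := x \<mu> + 1))) else 0)
     + (\<Sum>x\<in>?S. if 0 < x \<mu> then ?r x * (g x - g (x(\<mu> := x \<mu> - 1))) else 0)"
    by (subst sum.distrib[symmetric]) (rule sum.cong[OF refl split])
  also have "(\<Sum>x\<in>?S. if 0 < x \<mu> then ?r x * (g x - g (x(\<mu> := x \<mu> - 1))) else 0)
     = (\<Sum>z\<in>?S. if z \<mu> + 1 < int M then ?r (z(\<mu> := z \<mu> + 1)) * (g (z(\<mu> := z \<mu> + 1)) - g z) else 0)"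
    by (subst shift_reindex[OF assms]) (intro sum.cong refl, simp)
  finally show ?thesis
    by (simp only: sum.distrib[symmetric]) (intro sum.cong refl, simp add: LapF_def Let_def)
qed

lemma edge_ineq:
  fixes p q :: real and u v :: complex
  shows "Re (complex_of_real (p\<^sup>2) * cnj u * (u - v) + complex_of_real (q\<^sup>2) * cnj v * (v - u))
    \<ge> (cmod (of_real p * u - of_real q * v))\<^sup>2 - ((p - q)\<^sup>2 * (cmod u)\<^sup>2 + (p - q)\<^sup>2 * (cmod v)\<^sup>2) / 2"
proof -
  have "2 * (Re u * Re v + Im u * Im v) \<le> ((Re u)\<^sup>2 + (Im u)\<^sup>2) + ((Re v)\<^sup>2 + (Im v)\<^sup>2)"
    using zero_le_power2[of "Re u - Re v"] zero_le_power2[of "Im u - Im v"] by (simp add: power2_eq_square algebra_simps)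
  then have h: "(p - q)\<^sup>2 * (2 * (Re u * Re v + Im u * Im v)) \<le> (p - q)\<^sup>2 * (((Re u)\<^sup>2 + (Im u)\<^sup>2) + ((Re v)\<^sup>2 + (Im v)\<^sup>2))"
    by (intro mult_left_mono) auto
  have i: "Re (complex_of_real (p\<^sup>2) * cnj u * (u - v) + complex_of_real (q\<^sup>2) * cnj v * (v - u))
     = (cmod (of_real p * u - of_real q * v))\<^sup>2 - (p - q)\<^sup>2 * (Re u * Re v + Im u * Im v)"
    unfolding cmod_power2 by (simp add: power2_eq_square algebra_simps)
  have c: "(cmod u)\<^sup>2 = (Re u)\<^sup>2 + (Im u)\<^sup>2" "(cmod v)\<^sup>2 = (Re v)\<^sup>2 + (Im v)\<^sup>2" unfolding cmod_power2 by simp_all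
  show ?thesis unfolding i c using h by (simp add: algebra_simps)
qed


lemma lin_aux: fixes aa bb ee1 ee2 xx rr yy :: real
  assumes "aa \<le> ee1" "bb \<le> ee2" "yy = (ee1 + ee2) / 2" "xx - (aa + bb)/2 \<le> rr" shows "xx - yy \<le> rr"
  using assms by argo

lemma lap_edge: assumes p: "p > 0" and q: "q > 0" and e1: "(1 - q/p)\<^sup>2 \<le> \<epsilon>" and e2: "(1 - p/q)\<^sup>2 \<le> \<epsilon>"
  shows "Re (complex_of_real (p\<^sup>2) * cnj u * (u - v) + complex_of_real (q\<^sup>2) * cnj v * (v - u))
    \<ge> (cmod (of_real p * u - of_real q * v))\<^sup>2 - \<epsilon> / 2 * ((cmod (of_real p * u))\<^sup>2 + (cmod (of_real q * v))\<^sup>2)"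
proof -
  have a: "(p - q)\<^sup>2 * (cmod u)\<^sup>2 = (1 - q/p)\<^sup>2 * (cmod (of_real p * u))\<^sup>2"
    using p by (simp add: norm_mult power_mult_distrib power2_eq_square field_simps)
  have b: "(p - q)\<^sup>2 * (cmod v)\<^sup>2 = (1 - p/q)\<^sup>2 * (cmod (of_real q * v))\<^sup>2"
    using q by (simp add: norm_mult power_mult_distrib power2_eq_square field_simps)
  have "(1 - q/p)\<^sup>2 * (cmod (of_real p * u))\<^sup>2 \<le> \<epsilon> * (cmod (of_real p * u))\<^sup>2"
    using e1 by (intro mult_right_mono) auto
  moreover have "(1 - p/q)\<^sup>2 * (cmod (of_real q * v))\<^sup>2 \<le> \<epsilon> * (cmod (of_real q * v))\<^sup>2"
    using e2 by (intro mult_right_mono) auto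
  moreover have "\<epsilon> / 2 * ((cmod (of_real p * u))\<^sup>2 + (cmod (of_real q * v))\<^sup>2)
     = (\<epsilon> * (cmod (of_real p * u))\<^sup>2 + \<epsilon> * (cmod (of_real q * v))\<^sup>2) / 2" by (simp add: algebra_simps)
  ultimately show ?thesis using edge_ineq[where p=p and q=q and u=u and v=v] unfolding a b
    by (metis (no_types, lifting) lin_aux)
qed

lemma lap_mu: assumes mu: "\<mu> < d" and pos: "\<And>x. \<rho> x > 0"
  and eps: "\<And>z. z \<in> grid d M \<Longrightarrow> z \<mu> + 1 < int M \<Longrightarrow>
      (1 - \<rho> (z(\<mu> := z \<mu> + 1)) / \<rho> z)\<^sup>2 \<le> \<epsilon> \<and> (1 - \<rho> z / \<rho> (z(\<mu> := z \<mu> + 1)))\<^sup>2 \<le> \<epsilon>"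
  and e0: "\<epsilon> \<ge> 0"
  and psi: "\<psi> = (\<lambda>x. complex_of_real (\<rho> x) * g x)"
  shows "Re (\<Sum>z\<in>grid d M. if z \<mu> + 1 < int M then LapF \<rho> g z \<mu> else 0)
    \<ge> (\<Sum>z\<in>grid d M. if z \<mu> + 1 < int M then (cmod (\<psi> z - \<psi> (z(\<mu> := z \<mu> + 1))))\<^sup>2 else 0)
      - \<epsilon> * (\<Sum>x\<in>grid d M. (cmod (\<psi> x))\<^sup>2)"
proof -
  let ?S = "grid d M"
  let ?c = "\<lambda>z. z \<mu> + 1 < int M"
  let ?z' = "\<lambda>z. z(\<mu> := z \<mu> + 1)"
  have pw: "\<And>z. z \<in> ?S \<Longrightarrow> Re (if ?c z then LapF \<rho> g z \<mu> else 0)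
     \<ge> (if ?c z then (cmod (\<psi> z - \<psi> (?z' z)))\<^sup>2 else 0)
       - \<epsilon> / 2 * ((if ?c z then (cmod (\<psi> z))\<^sup>2 else 0) + (if ?c z then (cmod (\<psi> (?z' z)))\<^sup>2 else 0))"
  proof -
    fix z assume z: "z \<in> ?S"
    show "Re (if ?c z then LapF \<rho> g z \<mu> else 0)
     \<ge> (if ?c z then (cmod (\<psi> z - \<psi> (?z' z)))\<^sup>2 else 0)
       - \<epsilon> / 2 * ((if ?c z then (cmod (\<psi> z))\<^sup>2 else 0) + (if ?c z then (cmod (\<psi> (?z' z)))\<^sup>2 else 0))"
    proof (cases "?c z")
      case True
      from eps[OF z True] have e: "(1 - \<rho> (?z' z) / \<rho> z)\<^sup>2 \<le> \<epsilon>" "(1 - \<rho> z / \<rho> (?z' z))\<^sup>2 \<le> \<epsilon>" by auto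
      show ?thesis using True lap_edge[OF pos pos e, of "g z" "g (?z' z)"]
        unfolding LapF_def Let_def psi by simp
    qed simp
  qed
  have "Re (\<Sum>z\<in>?S. if ?c z then LapF \<rho> g z \<mu> else 0) = (\<Sum>z\<in>?S. Re (if ?c z then LapF \<rho> g z \<mu> else 0))"
    by (simp add: Re_sum)
  also have "\<dots> \<ge> (\<Sum>z\<in>?S. (if ?c z then (cmod (\<psi> z - \<psi> (?z' z)))\<^sup>2 else 0)
       - \<epsilon> / 2 * ((if ?c z then (cmod (\<psi> z))\<^sup>2 else 0) + (if ?c z then (cmod (\<psi> (?z' z)))\<^sup>2 else 0)))"
    by (intro sum_mono pw)
  also have "(\<Sum>z\<in>?S. (if ?c z then (cmod (\<psi> z - \<psi> (?z' z)))\<^sup>2 else 0)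
       - \<epsilon> / 2 * ((if ?c z then (cmod (\<psi> z))\<^sup>2 else 0) + (if ?c z then (cmod (\<psi> (?z' z)))\<^sup>2 else 0)))
     = (\<Sum>z\<in>?S. if ?c z then (cmod (\<psi> z - \<psi> (?z' z)))\<^sup>2 else 0)
       - \<epsilon> / 2 * ((\<Sum>z\<in>?S. if ?c z then (cmod (\<psi> z))\<^sup>2 else 0) + (\<Sum>z\<in>?S. if ?c z then (cmod (\<psi> (?z' z)))\<^sup>2 else 0))"
    by (simp only: sum_subtractf sum.distrib[symmetric] sum_distrib_left[symmetric])
  finally have *: "Re (\<Sum>z\<in>?S. if ?c z then LapF \<rho> g z \<mu> else 0) \<ge>
      (\<Sum>z\<in>?S. if ?c z then (cmod (\<psi> z - \<psi> (?z' z)))\<^sup>2 else 0)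
       - \<epsilon> / 2 * ((\<Sum>z\<in>?S. if ?c z then (cmod (\<psi> z))\<^sup>2 else 0) + (\<Sum>z\<in>?S. if ?c z then (cmod (\<psi> (?z' z)))\<^sup>2 else 0))"
    .
  have s1: "(\<Sum>z\<in>?S. if ?c z then (cmod (\<psi> z))\<^sup>2 else 0) \<le> (\<Sum>x\<in>?S. (cmod (\<psi> x))\<^sup>2)"
    by (intro sum_mono) auto
  have "(\<Sum>z\<in>?S. if ?c z then (cmod (\<psi> (?z' z)))\<^sup>2 else 0) = (\<Sum>x\<in>?S. if 0 < x \<mu> then (cmod (\<psi> x))\<^sup>2 else 0)"
    by (rule shift_reindex[OF mu, symmetric])
  also have "\<dots> \<le> (\<Sum>x\<in>?S. (cmod (\<psi> x))\<^sup>2)" by (intro sum_mono) auto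
  finally have s2: "(\<Sum>z\<in>?S. if ?c z then (cmod (\<psi> (?z' z)))\<^sup>2 else 0) \<le> (\<Sum>x\<in>?S. (cmod (\<psi> x))\<^sup>2)" .
  have "\<epsilon> / 2 * ((\<Sum>z\<in>?S. if ?c z then (cmod (\<psi> z))\<^sup>2 else 0) + (\<Sum>z\<in>?S. if ?c z then (cmod (\<psi> (?z' z)))\<^sup>2 else 0))
     \<le> \<epsilon> / 2 * ((\<Sum>x\<in>?S. (cmod (\<psi> x))\<^sup>2) + (\<Sum>x\<in>?S. (cmod (\<psi> x))\<^sup>2))"
    using s1 s2 e0 by (intro mult_left_mono) auto
  with * show ?thesis by simp
qed

lemma lap_total: assumes pos: "\<And>x. \<rho> x > 0"
  and eps: "\<And>\<mu> z. \<mu> < d \<Longrightarrow> z \<in> grid d M \<Longrightarrow> z \<mu> + 1 < int M \<Longrightarrow>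
      (1 - \<rho> (z(\<mu> := z \<mu> + 1)) / \<rho> z)\<^sup>2 \<le> \<epsilon> \<and> (1 - \<rho> z / \<rho> (z(\<mu> := z \<mu> + 1)))\<^sup>2 \<le> \<epsilon>"
  and e0: "\<epsilon> \<ge> 0"
  and psi: "\<psi> = (\<lambda>x. complex_of_real (\<rho> x) * g x)"
  shows "Re (\<Sum>x\<in>grid d M. complex_of_real ((\<rho> x)\<^sup>2) * cnj (g x) *
      (\<Sum>\<mu><d. 2 * g x - g (nbr (grid d M) x \<mu> 1) - g (nbr (grid d M) x \<mu> (-1))))
    \<ge> Eng {..<d} (\<lambda>_. 0) M \<psi> - real d * \<epsilon> * (\<Sum>x\<in>grid d M. (cmod (\<psi> x))\<^sup>2)"
proof -
  let ?S = "grid d M"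
  have "(\<Sum>x\<in>?S. complex_of_real ((\<rho> x)\<^sup>2) * cnj (g x) *
      (\<Sum>\<mu><d. 2 * g x - g (nbr ?S x \<mu> 1) - g (nbr ?S x \<mu> (-1))))
     = (\<Sum>\<mu><d. \<Sum>x\<in>?S. complex_of_real ((\<rho> x)\<^sup>2) * cnj (g x) * (2 * g x - g (nbr ?S x \<mu> 1) - g (nbr ?S x \<mu> (-1))))"
    by (simp add: sum_distrib_left sum.swap[of _ ?S])
  also have "\<dots> = (\<Sum>\<mu><d. \<Sum>z\<in>?S. if z \<mu> + 1 < int M then LapF \<rho> g z \<mu> else 0)"
    by (intro sum.cong refl lap_identity) auto
  finally have "Re (\<Sum>x\<in>?S. complex_of_real ((\<rho> x)\<^sup>2) * cnj (g x) *
      (\<Sum>\<mu><d. 2 * g x - g (nbr ?S x \<mu> 1) - g (nbr ?S x \<mu> (-1))))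
     = (\<Sum>\<mu><d. Re (\<Sum>z\<in>?S. if z \<mu> + 1 < int M then LapF \<rho> g z \<mu> else 0))"
    by (simp add: Re_sum)
  also have "\<dots> \<ge> (\<Sum>\<mu><d. (\<Sum>z\<in>?S. if z \<mu> + 1 < int M then (cmod (\<psi> z - \<psi> (z(\<mu> := z \<mu> + 1))))\<^sup>2 else 0)
      - \<epsilon> * (\<Sum>x\<in>?S. (cmod (\<psi> x))\<^sup>2))"
    by (intro sum_mono lap_mu[OF _ pos _ e0 psi]) (use eps in blast)+
  finally show ?thesis
    by (simp add: sum_subtractf Eng_def grid_cube)
qed

lemma block_form: assumes "finite B" and r: "\<And>x y. x \<in> B \<Longrightarrow> y \<in> B \<Longrightarrow> \<bar>r x y - 1\<bar> \<le> \<delta>"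
  shows "Re (\<Sum>x\<in>B. \<Sum>y\<in>B. complex_of_real (r x y) * cnj (\<psi> x) * \<psi> y)
    \<ge> (cmod (\<Sum>x\<in>B. \<psi> x))\<^sup>2 - \<delta> * real (card B) * (\<Sum>x\<in>B. (cmod (\<psi> x))\<^sup>2)"
proof -
  have main: "(\<Sum>x\<in>B. \<Sum>y\<in>B. Re (cnj (\<psi> x) * \<psi> y)) = (cmod (\<Sum>x\<in>B. \<psi> x))\<^sup>2"
  proof -
    have "cnj (\<Sum>x\<in>B. \<psi> x) * (\<Sum>x\<in>B. \<psi> x) = (\<Sum>x\<in>B. \<Sum>y\<in>B. cnj (\<psi> x) * \<psi> y)"
      by (simp add: cnj_sum sum_product)
    then show ?thesis by (simp add: Re_sum cmod_sq_Re)
  qed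
  have pw: "\<And>x y. x \<in> B \<Longrightarrow> y \<in> B \<Longrightarrow> Re (complex_of_real (r x y) * cnj (\<psi> x) * \<psi> y)
      \<ge> Re (cnj (\<psi> x) * \<psi> y) - \<delta> * ((cmod (\<psi> x))\<^sup>2 + (cmod (\<psi> y))\<^sup>2) / 2"
  proof -
    fix x y assume xy: "x \<in> B" "y \<in> B"
    have e: "Re (complex_of_real (r x y) * cnj (\<psi> x) * \<psi> y) = Re (cnj (\<psi> x) * \<psi> y) + (r x y - 1) * Re (cnj (\<psi> x) * \<psi> y)"
      by (simp add: algebra_simps)
    have "\<bar>(r x y - 1) * Re (cnj (\<psi> x) * \<psi> y)\<bar> \<le> \<delta> * (cmod (\<psi> x) * cmod (\<psi> y))"
    proof -
      have "\<bar>Re (cnj (\<psi> x) * \<psi> y)\<bar> \<le> cmod (\<psi> x) * cmod (\<psi> y)"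
        using abs_Re_le_cmod[of "cnj (\<psi> x) * \<psi> y"] by (simp add: norm_mult)
      then show ?thesis unfolding abs_mult using r[OF xy] by (intro mult_mono) auto
    qed
    moreover have "cmod (\<psi> x) * cmod (\<psi> y) \<le> ((cmod (\<psi> x))\<^sup>2 + (cmod (\<psi> y))\<^sup>2) / 2"
      using zero_le_power2[of "cmod (\<psi> x) - cmod (\<psi> y)"] by (simp add: power2_eq_square algebra_simps)
    moreover have "\<delta> \<ge> 0" using r[OF xy] by linarith
    ultimately have "\<bar>(r x y - 1) * Re (cnj (\<psi> x) * \<psi> y)\<bar> \<le> \<delta> * ((cmod (\<psi> x))\<^sup>2 + (cmod (\<psi> y))\<^sup>2) / 2"
      by (smt (verit) mult_left_mono times_divide_eq_right)
    then show "Re (complex_of_real (r x y) * cnj (\<psi> x) * \<psi> y)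
      \<ge> Re (cnj (\<psi> x) * \<psi> y) - \<delta> * ((cmod (\<psi> x))\<^sup>2 + (cmod (\<psi> y))\<^sup>2) / 2"
      unfolding e by linarith
  qed
  have "Re (\<Sum>x\<in>B. \<Sum>y\<in>B. complex_of_real (r x y) * cnj (\<psi> x) * \<psi> y)
     = (\<Sum>x\<in>B. \<Sum>y\<in>B. Re (complex_of_real (r x y) * cnj (\<psi> x) * \<psi> y))" by (simp add: Re_sum)
  also have "\<dots> \<ge> (\<Sum>x\<in>B. \<Sum>y\<in>B. Re (cnj (\<psi> x) * \<psi> y) - \<delta> * ((cmod (\<psi> x))\<^sup>2 + (cmod (\<psi> y))\<^sup>2) / 2)"
    by (intro sum_mono pw)
  also have "(\<Sum>x\<in>B. \<Sum>y\<in>B. Re (cnj (\<psi> x) * \<psi> y) - \<delta> * ((cmod (\<psi> x))\<^sup>2 + (cmod (\<psi> y))\<^sup>2) / 2)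
     = (cmod (\<Sum>x\<in>B. \<psi> x))\<^sup>2 - \<delta> * real (card B) * (\<Sum>x\<in>B. (cmod (\<psi> x))\<^sup>2)"
  proof -
    have "(\<Sum>x\<in>B. \<Sum>y\<in>B. ((cmod (\<psi> x))\<^sup>2 + (cmod (\<psi> y))\<^sup>2)) = 2 * real (card B) * (\<Sum>x\<in>B. (cmod (\<psi> x))\<^sup>2)"
      by (simp add: sum.distrib sum_distrib_left[symmetric] sum_distrib_right[symmetric] algebra_simps)
    then show ?thesis using main
      by (simp add: sum_subtractf sum_divide_distrib[symmetric] sum_distrib_left[symmetric])
  qed
  finally show ?thesis .
qed


definition QQ :: "nat \<Rightarrow> nat \<Rightarrow> ((nat\<Rightarrow>int)\<Rightarrow>complex) \<Rightarrow> (nat\<Rightarrow>int) \<Rightarrow> complex" where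
  "QQ d N g x = complex_of_real (1 / real N ^ d) * (\<Sum>y\<in>block d (int N) (bidx N x). g y)"

lemma Hop_eq: assumes "x \<in> grid d (L^m)"
  shows "Hop d L k m a mu0 g x = complex_of_real (1 / (1 / real L ^ k)\<^sup>2) *
      (\<Sum>\<mu><d. 2 * g x - g (nbr (grid d (L^m)) x \<mu> 1) - g (nbr (grid d (L^m)) x \<mu> (-1)))
    + complex_of_real (mu_bar mu0 L k) * g x
    + complex_of_real (a_seq a L (k+1) / (real L)\<^sup>2) * QQ d (L^(k+1)) g x"
proof -
  have q: "Qadj L (k + 1) (Qavg d L (k + 1) g) x = QQ d (L^(k+1)) g x"
  proof -
    have e: "real L ^ ((k + 1) * d) = real (L^(k+1)) ^ d" by (simp only: of_nat_power power_mult)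
    show ?thesis unfolding Qadj_def Qavg_def QQ_def bidx_def e by (rule refl)
  qed
  have l: "- neumann_lap d (1 / real L ^ k) (grid d (L ^ m)) g x = complex_of_real (1 / (1 / real L ^ k)\<^sup>2) *
      (\<Sum>\<mu><d. 2 * g x - g (nbr (grid d (L^m)) x \<mu> 1) - g (nbr (grid d (L^m)) x \<mu> (-1)))"
  proof -
    have "(\<Sum>\<mu><d. g (nbr (grid d (L^m)) x \<mu> 1) - 2 * g x + g (nbr (grid d (L^m)) x \<mu> (-1)))
       = - (\<Sum>\<mu><d. 2 * g x - g (nbr (grid d (L^m)) x \<mu> 1) - g (nbr (grid d (L^m)) x \<mu> (-1)))"
      by (subst sum_negf[symmetric]) (simp add: algebra_simps)
    then show ?thesis unfolding neumann_lap_def by simp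
  qed
  show ?thesis unfolding Hop_def Let_def using assms q l by simp
qed

lemma sum_part: assumes "N > 0"
  shows "(\<Sum>x\<in>grid d (N * M). F x) = (\<Sum>w\<in>grid d M. \<Sum>x\<in>block d (int N) w. F x)"
  unfolding grid_partition[OF assms, of d M]
proof (rule sum.UNION_disjoint)
  show "finite (grid d M)" by (rule finite_grid)
  show "\<forall>w\<in>grid d M. finite (block d (int N) w)"
    using block_cube grid_zero finite_cube by (metis finite_lessThan)
  show "\<forall>w\<in>grid d M. \<forall>w'\<in>grid d M. w \<noteq> w' \<longrightarrow> block d (int N) w \<inter> block d (int N) w' = {}"
    using block_disjoint[OF assms] by blast
qed

lemma bidx_block: assumes "N > 0" "w \<in> grid d M" "x \<in> block d (int N) w"
  shows "bidx N x = w"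
proof
  fix \<mu> show "bidx N x \<mu> = w \<mu>"
  proof (cases "\<mu> < d")
    case True then show ?thesis using assms by (auto simp: bidx_def block_def intro!: div_block)
  next
    case False then show ?thesis using assms by (auto simp: bidx_def block_def grid_def)
  qed
qed

lemma blocks_energy: assumes "N > 0"
  shows "(\<Sum>w\<in>grid d M. Eng {..<d} (\<lambda>\<mu>. int N * w \<mu>) N \<psi>) \<le> Eng {..<d} (\<lambda>_. 0) (N * M) \<psi>"
proof -
  let ?D = "\<lambda>z \<mu>. (cmod (\<psi> z - \<psi> (z(\<mu> := z \<mu> + 1))))\<^sup>2"
  have "(\<Sum>w\<in>grid d M. Eng {..<d} (\<lambda>\<mu>. int N * w \<mu>) N \<psi>)
     = (\<Sum>w\<in>grid d M. \<Sum>\<mu><d. \<Sum>z\<in>block d (int N) w. if z \<mu> + 1 < int N * w \<mu> + int N then ?D z \<mu> else 0)"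
    unfolding Eng_def by (intro sum.cong refl) (simp add: block_cube grid_zero)
  also have "\<dots> = (\<Sum>\<mu><d. \<Sum>w\<in>grid d M. \<Sum>z\<in>block d (int N) w. if z \<mu> + 1 < int N * w \<mu> + int N then ?D z \<mu> else 0)"
    by (rule sum.swap)
  also have "\<dots> \<le> (\<Sum>\<mu><d. \<Sum>w\<in>grid d M. \<Sum>z\<in>block d (int N) w. if z \<mu> + 1 < int (N * M) then ?D z \<mu> else 0)"
  proof (intro sum_mono)
    fix \<mu> w z assume m: "\<mu> \<in> {..<d}" and w: "w \<in> grid d M" and z: "z \<in> block d (int N) w"
    have "w \<mu> + 1 \<le> int M" using w m by (auto simp: grid_def)
    then have "int N * (w \<mu> + 1) \<le> int N * int M" by (intro mult_left_mono) auto
    then have "int N * w \<mu> + int N \<le> int (N * M)" by (simp add: algebra_simps)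
    then show "(if z \<mu> + 1 < int N * w \<mu> + int N then ?D z \<mu> else 0) \<le> (if z \<mu> + 1 < int (N * M) then ?D z \<mu> else 0)"
      by auto
  qed
  also have "\<dots> = Eng {..<d} (\<lambda>_. 0) (N * M) \<psi>"
    unfolding Eng_def grid_cube[symmetric] sum_part[OF assms] by simp
  finally show ?thesis .
qed

lemma global_poinc: assumes "N > 0"
  shows "(\<Sum>x\<in>grid d (N * M). (cmod (\<psi> x))\<^sup>2)
    \<le> 2 ^ d * real N ^ 2 * Eng {..<d} (\<lambda>_. 0) (N * M) \<psi>
      + (\<Sum>w\<in>grid d M. (cmod (\<Sum>x\<in>block d (int N) w. \<psi> x))\<^sup>2 / real N ^ d)"
proof -
  have "(\<Sum>x\<in>grid d (N * M). (cmod (\<psi> x))\<^sup>2) = (\<Sum>w\<in>grid d M. \<Sum>x\<in>block d (int N) w. (cmod (\<psi> x))\<^sup>2)"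
    by (rule sum_part[OF assms])
  also have "\<dots> \<le> (\<Sum>w\<in>grid d M. 2 ^ d * real N ^ 2 * Eng {..<d} (\<lambda>\<mu>. int N * w \<mu>) N \<psi>
      + (cmod (\<Sum>x\<in>block d (int N) w. \<psi> x))\<^sup>2 / real N ^ d)"
  proof (intro sum_mono)
    fix w assume w: "w \<in> grid d M"
    show "(\<Sum>x\<in>block d (int N) w. (cmod (\<psi> x))\<^sup>2) \<le> 2 ^ d * real N ^ 2 * Eng {..<d} (\<lambda>\<mu>. int N * w \<mu>) N \<psi>
      + (cmod (\<Sum>x\<in>block d (int N) w. \<psi> x))\<^sup>2 / real N ^ d"
      using var_cube[OF finite_lessThan assms, where b="\<lambda>\<mu>. int N * w \<mu>" and h=\<psi>] block_cube[of d w N] grid_zero[OF w] by simp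
  qed
  also have "\<dots> = 2 ^ d * real N ^ 2 * (\<Sum>w\<in>grid d M. Eng {..<d} (\<lambda>\<mu>. int N * w \<mu>) N \<psi>)
      + (\<Sum>w\<in>grid d M. (cmod (\<Sum>x\<in>block d (int N) w. \<psi> x))\<^sup>2 / real N ^ d)"
    by (simp add: sum.distrib sum_distrib_left)
  also have "\<dots> \<le> 2 ^ d * real N ^ 2 * Eng {..<d} (\<lambda>_. 0) (N * M) \<psi>
      + (\<Sum>w\<in>grid d M. (cmod (\<Sum>x\<in>block d (int N) w. \<psi> x))\<^sup>2 / real N ^ d)"
    using blocks_energy[OF assms, where d=d and M=M and \<psi>=\<psi>] by (intro add_right_mono mult_left_mono) auto
  finally show ?thesis .
qed


lemma block_card: "w \<in> grid d M \<Longrightarrow> card (block d (int N) w) = N ^ d"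
  using block_cube[of d w N] grid_zero[of w d M] card_cube[of "{..<d}"] by simp

lemma finite_block: "w \<in> grid d M \<Longrightarrow> finite (block d (int N) w)"
  using block_cube[of d w N] grid_zero[of w d M] finite_cube[of "{..<d}"] by simp

lemma Q_part: assumes N: "N > 0" and pos: "\<And>x. \<rho> x > 0"
  and del: "\<And>w x y. w \<in> grid d M \<Longrightarrow> x \<in> block d (int N) w \<Longrightarrow> y \<in> block d (int N) w \<Longrightarrow> \<bar>\<rho> x / \<rho> y - 1\<bar> \<le> \<delta>"
  and psi: "\<psi> = (\<lambda>x. complex_of_real (\<rho> x) * g x)"
  shows "Re (\<Sum>x\<in>grid d (N * M). complex_of_real ((\<rho> x)\<^sup>2) * cnj (g x) * QQ d N g x)
    \<ge> (\<Sum>w\<in>grid d M. (cmod (\<Sum>x\<in>block d (int N) w. \<psi> x))\<^sup>2 / real N ^ d)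
      - \<delta> * (\<Sum>x\<in>grid d (N * M). (cmod (\<psi> x))\<^sup>2)"
proof -
  let ?B = "\<lambda>w. block d (int N) w"
  have eq: "(\<Sum>x\<in>grid d (N * M). complex_of_real ((\<rho> x)\<^sup>2) * cnj (g x) * QQ d N g x)
    = (\<Sum>w\<in>grid d M. complex_of_real (1 / real N ^ d) *
        (\<Sum>x\<in>?B w. \<Sum>y\<in>?B w. complex_of_real (\<rho> x / \<rho> y) * cnj (\<psi> x) * \<psi> y))"
  proof -
    have "(\<Sum>x\<in>grid d (N * M). complex_of_real ((\<rho> x)\<^sup>2) * cnj (g x) * QQ d N g x)
      = (\<Sum>w\<in>grid d M. \<Sum>x\<in>?B w. complex_of_real ((\<rho> x)\<^sup>2) * cnj (g x) * QQ d N g x)"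
      by (rule sum_part[OF N])
    also have "\<dots> = (\<Sum>w\<in>grid d M. complex_of_real (1 / real N ^ d) *
        (\<Sum>x\<in>?B w. \<Sum>y\<in>?B w. complex_of_real (\<rho> x / \<rho> y) * cnj (\<psi> x) * \<psi> y))"
    proof (intro sum.cong refl)
      fix w assume w: "w \<in> grid d M"
      have "\<And>x. x \<in> ?B w \<Longrightarrow> complex_of_real ((\<rho> x)\<^sup>2) * cnj (g x) * QQ d N g x
         = complex_of_real (1 / real N ^ d) * (\<Sum>y\<in>?B w. complex_of_real (\<rho> x / \<rho> y) * cnj (\<psi> x) * \<psi> y)"
      proof -
        fix x assume x: "x \<in> ?B w"
        have b: "bidx N x = w" by (rule bidx_block[OF N w x])
        have "\<And>y. complex_of_real (\<rho> x / \<rho> y) * cnj (\<psi> x) * \<psi> y = complex_of_real ((\<rho> x)\<^sup>2) * cnj (g x) * g y"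
        proof -
          fix y
          have "\<rho> y \<noteq> 0" using pos[of y] by simp
          then show "complex_of_real (\<rho> x / \<rho> y) * cnj (\<psi> x) * \<psi> y = complex_of_real ((\<rho> x)\<^sup>2) * cnj (g x) * g y"
            unfolding psi by (simp add: field_simps power2_eq_square)
        qed
        then show "complex_of_real ((\<rho> x)\<^sup>2) * cnj (g x) * QQ d N g x
         = complex_of_real (1 / real N ^ d) * (\<Sum>y\<in>?B w. complex_of_real (\<rho> x / \<rho> y) * cnj (\<psi> x) * \<psi> y)"
          unfolding QQ_def b by (simp add: sum_distrib_left algebra_simps)
      qed
      then show "(\<Sum>x\<in>?B w. complex_of_real ((\<rho> x)\<^sup>2) * cnj (g x) * QQ d N g x)
        = complex_of_real (1 / real N ^ d) * (\<Sum>x\<in>?B w. \<Sum>y\<in>?B w. complex_of_real (\<rho> x / \<rho> y) * cnj (\<psi> x) * \<psi> y)"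
        by (simp add: sum_distrib_left)
    qed
    finally show ?thesis .
  qed
  have "Re (\<Sum>x\<in>grid d (N * M). complex_of_real ((\<rho> x)\<^sup>2) * cnj (g x) * QQ d N g x)
     = (\<Sum>w\<in>grid d M. (1 / real N ^ d) * Re (\<Sum>x\<in>?B w. \<Sum>y\<in>?B w. complex_of_real (\<rho> x / \<rho> y) * cnj (\<psi> x) * \<psi> y))"
    unfolding eq Re_sum by simp
  also have "\<dots> \<ge> (\<Sum>w\<in>grid d M. (1 / real N ^ d) * ((cmod (\<Sum>x\<in>?B w. \<psi> x))\<^sup>2 - \<delta> * real (card (?B w)) * (\<Sum>x\<in>?B w. (cmod (\<psi> x))\<^sup>2)))"
  proof (intro sum_mono mult_left_mono)
    fix w assume w: "w \<in> grid d M"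
    show "(cmod (\<Sum>x\<in>?B w. \<psi> x))\<^sup>2 - \<delta> * real (card (?B w)) * (\<Sum>x\<in>?B w. (cmod (\<psi> x))\<^sup>2)
       \<le> Re (\<Sum>x\<in>?B w. \<Sum>y\<in>?B w. complex_of_real (\<rho> x / \<rho> y) * cnj (\<psi> x) * \<psi> y)"
      by (rule block_form[OF finite_block[OF w]]) (rule del[OF w])
  qed simp
  also have "(\<Sum>w\<in>grid d M. (1 / real N ^ d) * ((cmod (\<Sum>x\<in>?B w. \<psi> x))\<^sup>2 - \<delta> * real (card (?B w)) * (\<Sum>x\<in>?B w. (cmod (\<psi> x))\<^sup>2)))
     = (\<Sum>w\<in>grid d M. (cmod (\<Sum>x\<in>?B w. \<psi> x))\<^sup>2 / real N ^ d - \<delta> * (\<Sum>x\<in>?B w. (cmod (\<psi> x))\<^sup>2))"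
    using N by (intro sum.cong refl) (simp add: block_card field_simps)
  also have "\<dots> = (\<Sum>w\<in>grid d M. (cmod (\<Sum>x\<in>?B w. \<psi> x))\<^sup>2 / real N ^ d)
      - \<delta> * (\<Sum>x\<in>grid d (N * M). (cmod (\<psi> x))\<^sup>2)"
    unfolding sum_part[OF N] by (simp add: sum_subtractf sum_distrib_left)
  finally show ?thesis .
qed


lemma Re_mass: "Re (complex_of_real c * cnj z * z) = c * (cmod z)\<^sup>2"
  unfolding cmod_power2 by (simp add: power2_eq_square algebra_simps)

lemma key_general:
  fixes \<rho> :: "(nat\<Rightarrow>int) \<Rightarrow> real" and g :: "(nat\<Rightarrow>int) \<Rightarrow> complex"
  assumes N: "N = L^(k+1)" "L^m = N * M'" "N > 0"
  and pos: "\<And>x. \<rho> x > 0"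
  and eps: "\<And>\<mu> z. \<mu> < d \<Longrightarrow> z \<in> grid d (L^m) \<Longrightarrow> z \<mu> + 1 < int (L^m) \<Longrightarrow>
      (1 - \<rho> (z(\<mu> := z \<mu> + 1)) / \<rho> z)\<^sup>2 \<le> \<epsilon> \<and> (1 - \<rho> z / \<rho> (z(\<mu> := z \<mu> + 1)))\<^sup>2 \<le> \<epsilon>"
  and e0: "\<epsilon> \<ge> 0"
  and del: "\<And>w x y. w \<in> grid d M' \<Longrightarrow> x \<in> block d (int N) w \<Longrightarrow> y \<in> block d (int N) w \<Longrightarrow> \<bar>\<rho> x / \<rho> y - 1\<bar> \<le> \<delta>"
  and bq: "a_seq a L (k+1) / (real L)\<^sup>2 \<ge> 0"
  and mb: "mu_bar mu0 L k \<ge> 0"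
  and psi: "\<psi> = (\<lambda>x. complex_of_real (\<rho> x) * g x)"
  shows "Re (\<Sum>x\<in>grid d (L^m). complex_of_real ((\<rho> x)\<^sup>2) * cnj (g x) * Hop d L k m a mu0 g x)
    \<ge> (min ((1 / (1 / real L ^ k)\<^sup>2) / (2 ^ d * real N ^ 2)) (a_seq a L (k+1) / (real L)\<^sup>2)
        - (1 / (1 / real L ^ k)\<^sup>2) * real d * \<epsilon> - (a_seq a L (k+1) / (real L)\<^sup>2) * \<delta>)
      * (\<Sum>x\<in>grid d (L^m). (cmod (\<psi> x))\<^sup>2)"
proof -
  let ?S = "grid d (L^m)"
  define ie where "ie = 1 / (1 / real L ^ k)\<^sup>2"
  define b where "b = a_seq a L (k+1) / (real L)\<^sup>2"
  define mu where "mu = mu_bar mu0 L k"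
  define Z where "Z = (\<Sum>x\<in>?S. (cmod (\<psi> x))\<^sup>2)"
  define EG where "EG = Eng {..<d} (\<lambda>_. 0) (L^m) \<psi>"
  define Bw where "Bw = (\<Sum>w\<in>grid d M'. (cmod (\<Sum>x\<in>block d (int N) w. \<psi> x))\<^sup>2 / real N ^ d)"
  define r where "r = (\<lambda>x. complex_of_real ((\<rho> x)\<^sup>2) * cnj (g x))"
  define LS where "LS = (\<Sum>x\<in>?S. r x * (\<Sum>\<mu><d. 2 * g x - g (nbr ?S x \<mu> 1) - g (nbr ?S x \<mu> (-1))))"
  define MS where "MS = (\<Sum>x\<in>?S. r x * g x)"
  define QS where "QS = (\<Sum>x\<in>?S. r x * QQ d N g x)"
  have ie0: "ie > 0" unfolding ie_def using N by simp
  have dec: "(\<Sum>x\<in>?S. r x * Hop d L k m a mu0 g x) = complex_of_real ie * LS + complex_of_real mu * MS + complex_of_real b * QS"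
  proof -
    have "(\<Sum>x\<in>?S. r x * Hop d L k m a mu0 g x) = (\<Sum>x\<in>?S. complex_of_real ie * (r x * (\<Sum>\<mu><d. 2 * g x - g (nbr ?S x \<mu> 1) - g (nbr ?S x \<mu> (-1))))
       + complex_of_real mu * (r x * g x) + complex_of_real b * (r x * QQ d N g x))"
      by (intro sum.cong refl) (simp add: Hop_eq N(1) ie_def mu_def b_def algebra_simps)
    then show ?thesis unfolding LS_def MS_def QS_def by (simp add: sum.distrib sum_distrib_left)
  qed
  have LSb: "Re LS \<ge> EG - real d * \<epsilon> * Z"
    unfolding LS_def r_def EG_def Z_def by (rule lap_total[OF pos eps e0 psi])
  have MSb: "Re MS \<ge> 0" unfolding MS_def r_def Re_sum by (intro sum_nonneg) (subst Re_mass, simp)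
  have QSb: "Re QS \<ge> Bw - \<delta> * Z"
    unfolding QS_def r_def Bw_def Z_def N(2) by (rule Q_part[OF N(3) pos del psi])
  have P: "Z \<le> 2 ^ d * real N ^ 2 * EG + Bw"
    unfolding Z_def EG_def Bw_def N(2) by (rule global_poinc[OF N(3)])
  have EG0: "EG \<ge> 0" unfolding EG_def by (rule Eng_nonneg)
  have Bw0: "Bw \<ge> 0" unfolding Bw_def by (intro sum_nonneg) simp
  define \<theta> where "\<theta> = min (ie / (2 ^ d * real N ^ 2)) b"
  have c0: "2 ^ d * real N ^ 2 > 0" using N by simp
  have th0: "\<theta> \<ge> 0" unfolding \<theta>_def using ie0 c0 bq b_def by simp
  have th1: "\<theta> * (2 ^ d * real N ^ 2) \<le> ie"
  proof -
    have "\<theta> \<le> ie / (2 ^ d * real N ^ 2)" unfolding \<theta>_def by simp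
    then show ?thesis using c0 by (simp add: field_simps)
  qed
  have th2: "\<theta> \<le> b" unfolding \<theta>_def by simp
  have "\<theta> * Z \<le> \<theta> * (2 ^ d * real N ^ 2 * EG + Bw)" using P th0 by (rule mult_left_mono)
  also have "\<dots> = (\<theta> * (2 ^ d * real N ^ 2)) * EG + \<theta> * Bw" by (simp add: algebra_simps)
  also have "\<dots> \<le> ie * EG + b * Bw"
    using th1 th2 EG0 Bw0 by (intro add_mono mult_right_mono) auto
  finally have tz: "\<theta> * Z \<le> ie * EG + b * Bw" .
  have "Re (\<Sum>x\<in>?S. r x * Hop d L k m a mu0 g x) = ie * Re LS + mu * Re MS + b * Re QS"
    unfolding dec by simp
  also have "\<dots> \<ge> ie * (EG - real d * \<epsilon> * Z) + 0 + b * (Bw - \<delta> * Z)"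
    using LSb MSb QSb ie0 mb bq unfolding mu_def b_def
    by (intro add_mono mult_left_mono mult_nonneg_nonneg) auto
  finally have "Re (\<Sum>x\<in>?S. r x * Hop d L k m a mu0 g x) \<ge> ie * EG + b * Bw - (ie * real d * \<epsilon> + b * \<delta>) * Z"
    by (simp add: algebra_simps)
  then have "Re (\<Sum>x\<in>?S. r x * Hop d L k m a mu0 g x) \<ge> (\<theta> - ie * real d * \<epsilon> - b * \<delta>) * Z"
    using tz by (simp add: algebra_simps)
  then show ?thesis unfolding r_def \<theta>_def ie_def b_def Z_def by simp
qed


lemma a_seq_bounds: assumes "real L \<ge> 2" "0 < a" "j \<ge> 1"
  shows "a / 2 \<le> a_seq a L j \<and> a_seq a L j \<le> a"
proof -
  define x where "x = real L powr (-2)"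
  define y where "y = real L powr (- 2 * real j)"
  have Lp: "real L > 0" using assms by simp
  have x: "x = 1 / (real L)\<^sup>2" unfolding x_def using Lp by (simp add: powr_minus_divide powr_numeral)
  have "(real L)\<^sup>2 \<ge> 2\<^sup>2" using assms(1) by (intro power_mono) auto
  then have x4: "x \<le> 1/4" unfolding x using frac_le[of 1 1 4 "(real L)\<^sup>2"] by simp
  have y0: "y > 0" unfolding y_def using Lp by simp
  have yx: "y \<le> x" unfolding x_def y_def using assms by (intro powr_mono) auto
  have ay: "a_seq a L j = a * (1 - x) / (1 - y)" unfolding a_seq_def x_def y_def by simp
  have p: "1 - y > 0" using yx x4 by linarith
  have up: "a * (1 - x) / (1 - y) \<le> a"
    using p yx assms(2) by (simp add: divide_le_eq mult_left_mono)
  have "a * (1 - x) \<le> a * (1 - x) / (1 - y)"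
    using p y0 x4 assms(2) by (simp add: le_divide_eq mult_left_mono)
  moreover have "a / 2 \<le> a * (1 - x)"
  proof -
    have "a * x \<le> a * (1/4)" using x4 assms(2) by (intro mult_left_mono) auto
    moreover have "a * (1 - x) = a - a * x" by (simp add: algebra_simps)
    ultimately show ?thesis using assms(2) by linarith
  qed
  ultimately show ?thesis using up ay by linarith
qed

lemma exp_near1: fixes t s :: real assumes "\<bar>t\<bar> \<le> s" "s \<le> 1/2"
  shows "\<bar>exp t - 1\<bar> \<le> 2 * s"
proof -
  have "exp t \<le> exp s" using assms by simp
  also have "\<dots> \<le> 1 + 2 * s" using assms by (intro real_exp_bound_lemma) auto
  finally have 1: "exp t - 1 \<le> 2 * s" by simp
  have "1 + t \<le> exp t" by (rule exp_ge_add_one_self)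
  then have "1 - exp t \<le> 2 * s" using assms by linarith
  with 1 show ?thesis by linarith
qed

definition phi :: "nat \<Rightarrow> nat \<Rightarrow> (nat\<Rightarrow>int) \<Rightarrow> (nat\<Rightarrow>int) \<Rightarrow> int" where
  "phi d N c x = (\<Sum>\<mu><d. \<bar>x \<mu> - int N * c \<mu>\<bar>)"

lemma phi_lip: "\<bar>phi d N c x - phi d N c y\<bar> \<le> (\<Sum>\<mu><d. \<bar>x \<mu> - y \<mu>\<bar>)"
proof -
  have "\<bar>phi d N c x - phi d N c y\<bar> = \<bar>\<Sum>\<mu><d. \<bar>x \<mu> - int N * c \<mu>\<bar> - \<bar>y \<mu> - int N * c \<mu>\<bar>\<bar>"
    unfolding phi_def by (simp add: sum_subtractf)
  also have "\<dots> \<le> (\<Sum>\<mu><d. \<bar>\<bar>x \<mu> - int N * c \<mu>\<bar> - \<bar>y \<mu> - int N * c \<mu>\<bar>\<bar>)" by (rule sum_abs)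
  also have "\<dots> \<le> (\<Sum>\<mu><d. \<bar>x \<mu> - y \<mu>\<bar>)" by (intro sum_mono) arith
  finally show ?thesis .
qed

lemma phi_edge: assumes "\<mu> < d"
  shows "\<bar>phi d N c (z(\<mu> := z \<mu> + 1)) - phi d N c z\<bar> \<le> 1"
proof -
  have "\<bar>phi d N c (z(\<mu> := z \<mu> + 1)) - phi d N c z\<bar> \<le> (\<Sum>\<mu>'<d. \<bar>(z(\<mu> := z \<mu> + 1)) \<mu>' - z \<mu>'\<bar>)"
    by (rule phi_lip)
  also have "(\<Sum>\<mu>'<d. \<bar>(z(\<mu> := z \<mu> + 1)) \<mu>' - z \<mu>'\<bar>) = (\<Sum>\<mu>'<d. if \<mu>' = \<mu> then 1 else 0)"
    by (intro sum.cong refl) auto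
  also have "\<dots> = 1" using assms by simp
  finally show ?thesis .
qed

lemma block_diff: assumes "x \<in> block d (int N) w" "y \<in> block d (int N) w" "\<mu> < d" shows "\<bar>x \<mu> - y \<mu>\<bar> \<le> int N"
proof -
  have "int N*w \<mu> \<le> x \<mu>" "x \<mu> < int N * w \<mu> + int N" "int N*w \<mu> \<le> y \<mu>" "y \<mu> < int N * w \<mu> + int N"
    using assms by (auto simp: block_def)
  then show ?thesis by arith
qed

lemma phi_block_lip: "x \<in> block d (int N) w \<Longrightarrow> y \<in> block d (int N) w \<Longrightarrow> \<bar>phi d N c x - phi d N c y\<bar> \<le> int d * int N"
proof -
  assume xy: "x \<in> block d (int N) w" "y \<in> block d (int N) w"
  have "\<bar>phi d N c x - phi d N c y\<bar> \<le> (\<Sum>\<mu><d. \<bar>x \<mu> - y \<mu>\<bar>)" by (rule phi_lip)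
  also have "\<dots> \<le> (\<Sum>\<mu><d. int N)" by (intro sum_mono block_diff[OF xy]) auto
  finally show ?thesis by simp
qed

lemma phi_own_block: "x \<in> block d (int N) c \<Longrightarrow> phi d N c x \<le> int d * int N"
proof -
  assume x: "x \<in> block d (int N) c"
  have "phi d N c x \<le> (\<Sum>\<mu><d. int N)" unfolding phi_def
    by (intro sum_mono) (use x in \<open>auto simp: block_def\<close>)
  then show ?thesis by simp
qed

lemma phi_far_block: "x \<in> block d (int N) w \<Longrightarrow>
    phi d N c x \<ge> int N * (\<Sum>\<mu><d. \<bar>w \<mu> - c \<mu>\<bar>) - int d * int N"
proof -
  assume x: "x \<in> block d (int N) w"
  have "\<And>\<mu>. \<mu> < d \<Longrightarrow> int N * \<bar>w \<mu> - c \<mu>\<bar> - int N \<le> \<bar>x \<mu> - int N * c \<mu>\<bar>"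
  proof -
    fix \<mu> assume m: "\<mu> < d"
    have b: "int N * w \<mu> \<le> x \<mu>" "x \<mu> < int N * w \<mu> + int N" using x m by (auto simp: block_def)
    have "\<bar>int N * (w \<mu> - c \<mu>)\<bar> = int N * \<bar>w \<mu> - c \<mu>\<bar>" by (simp add: abs_mult)
    then have "int N * \<bar>w \<mu> - c \<mu>\<bar> = \<bar>int N * w \<mu> - int N * c \<mu>\<bar>" by (simp add: right_diff_distrib)
    then show "int N * \<bar>w \<mu> - c \<mu>\<bar> - int N \<le> \<bar>x \<mu> - int N * c \<mu>\<bar>" using b by arith
  qed
  then have "(\<Sum>\<mu><d. int N * \<bar>w \<mu> - c \<mu>\<bar> - int N) \<le> phi d N c x" unfolding phi_def by (intro sum_mono) auto
  then show ?thesis by (simp add: sum_subtractf sum_distrib_left)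
qed


definition lam0 :: "nat \<Rightarrow> real \<Rightarrow> real" where "lam0 d a = min (1 / 2 ^ d) (a / 2)"
definition gam :: "nat \<Rightarrow> real \<Rightarrow> real" where "gam d a = lam0 d a / (12 * real d)"
definition rho :: "nat \<Rightarrow> real \<Rightarrow> nat \<Rightarrow> (nat\<Rightarrow>int) \<Rightarrow> (nat\<Rightarrow>int) \<Rightarrow> real" where
  "rho d a N c x = exp (gam d a / real N * real_of_int (phi d N c x))"

lemma lam0_bounds: "0 < a \<Longrightarrow> a \<le> 1 \<Longrightarrow> 0 < lam0 d a \<and> lam0 d a \<le> 1/2 \<and> lam0 d a \<le> 1 / 2 ^ d \<and> lam0 d a \<le> a / 2"
proof -
  assume a: "0 < a" "a \<le> 1"
  have p: "0 < (1::real) / 2 ^ d" "0 < a / 2" using a by auto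
  have 1: "0 < lam0 d a" unfolding lam0_def using p by simp
  have 2: "lam0 d a \<le> a / 2" "lam0 d a \<le> 1 / 2 ^ d" unfolding lam0_def by auto
  show ?thesis using 1 2 a by auto
qed

lemma rho_ratio: "rho d a N c x / rho d a N c y = exp (gam d a / real N * real_of_int (phi d N c x - phi d N c y))"
  unfolding rho_def by (simp add: exp_diff[symmetric] algebra_simps)

lemma ratio_bound: assumes "\<bar>phi d N c x - phi d N c y\<bar> \<le> D" "N > 0" "gam d a * real_of_int D / real N \<le> 1/2" "gam d a \<ge> 0"
  shows "\<bar>rho d a N c x / rho d a N c y - 1\<bar> \<le> 2 * (gam d a * real_of_int D / real N)"
  unfolding rho_ratio
proof (rule exp_near1)
  have "\<bar>gam d a / real N * real_of_int (phi d N c x - phi d N c y)\<bar> = gam d a / real N * \<bar>real_of_int (phi d N c x - phi d N c y)\<bar>"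
    using assms by (simp add: abs_mult)
  also have "\<dots> \<le> gam d a / real N * real_of_int D"
    using assms by (intro mult_left_mono) (auto simp flip: of_int_abs)
  finally show "\<bar>gam d a / real N * real_of_int (phi d N c x - phi d N c y)\<bar> \<le> gam d a * real_of_int D / real N" by simp
qed (use assms in auto)

lemma key_spec:
  fixes g :: "(nat\<Rightarrow>int) \<Rightarrow> complex"
  assumes d: "d \<ge> 1" and a: "0 < a" "a \<le> 1" and L: "L > 1" and km: "k + 1 \<le> m" and mu0: "mu0 \<ge> 0"
  shows "Re (\<Sum>x\<in>grid d (L^m). complex_of_real ((rho d a (L^(k+1)) c x)\<^sup>2) * cnj (g x) * Hop d L k m a mu0 g x)
    \<ge> lam0 d a / (2 * (real L)\<^sup>2) * (\<Sum>x\<in>grid d (L^m). (cmod (complex_of_real (rho d a (L^(k+1)) c x) * g x))\<^sup>2)"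
proof -
  define N where "N = L^(k+1)"
  define M' where "M' = L^(m-(k+1))"
  define \<gamma> where "\<gamma> = gam d a"
  define l0 where "l0 = lam0 d a"
  have lb: "0 < l0" "l0 \<le> 1/2" "l0 \<le> 1 / 2 ^ d" "l0 \<le> a / 2" using lam0_bounds[OF a, of d] unfolding l0_def by auto
  have dpos: "real d \<ge> 1" using d by simp
  have g0: "\<gamma> > 0" unfolding \<gamma>_def gam_def l0_def[symmetric] using lb d by simp
  have gd: "real d * \<gamma> = l0 / 12" unfolding \<gamma>_def gam_def l0_def[symmetric] using d by simp
  have "1 * \<gamma> \<le> real d * \<gamma>" using dpos g0 by (intro mult_right_mono) auto
  then have g1: "\<gamma> \<le> 1/24" using gd lb by linarith
  have Nm: "L^m = N * M'" unfolding N_def M'_def using km by (metis le_add_diff_inverse power_add)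
  have N0: "N > 0" unfolding N_def using L by simp
  have L2: "real L \<ge> 2" using L by simp
  define P where "P = real L ^ k"
  have P0: "P > 0" unfolding P_def using L by simp
  have NP: "real N = real L * P" unfolding N_def P_def by simp
  have N1: "real N \<ge> 1" using N0 by simp
  define \<epsilon> where "\<epsilon> = (2 * \<gamma> / real N)\<^sup>2"
  define \<delta> where "\<delta> = 2 * (real d * \<gamma>)"
  have as: "a / 2 \<le> a_seq a L (k+1) \<and> a_seq a L (k+1) \<le> a" by (rule a_seq_bounds[OF L2 a(1)]) simp
  have key: "Re (\<Sum>x\<in>grid d (L^m). complex_of_real ((rho d a N c x)\<^sup>2) * cnj (g x) * Hop d L k m a mu0 g x)
    \<ge> (min ((1 / (1 / real L ^ k)\<^sup>2) / (2 ^ d * real N ^ 2)) (a_seq a L (k+1) / (real L)\<^sup>2)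
        - (1 / (1 / real L ^ k)\<^sup>2) * real d * \<epsilon> - (a_seq a L (k+1) / (real L)\<^sup>2) * \<delta>)
      * (\<Sum>x\<in>grid d (L^m). (cmod (complex_of_real (rho d a N c x) * g x))\<^sup>2)"
  proof (rule key_general[OF N_def Nm N0])
    show "\<And>x. rho d a N c x > 0" unfolding rho_def by simp
    show "\<epsilon> \<ge> 0" unfolding \<epsilon>_def by simp
    show "a_seq a L (k+1) / (real L)\<^sup>2 \<ge> 0" using as a by simp
    show "mu_bar mu0 L k \<ge> 0" unfolding mu_bar_def using mu0 by simp
    fix \<mu> and z :: "nat \<Rightarrow> int" assume m: "\<mu> < d"
    let ?z' = "z(\<mu> := z \<mu> + 1)"
    have s: "\<gamma> * real_of_int 1 / real N \<le> 1/2" proof -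
      have "\<gamma> / real N \<le> \<gamma> / 1" using N1 g0 by (intro divide_left_mono) auto
      then show ?thesis using g1 by simp
    qed
    have r1: "\<bar>rho d a N c ?z' / rho d a N c z - 1\<bar> \<le> 2 * (\<gamma> * real_of_int 1 / real N)"
      unfolding \<gamma>_def by (rule ratio_bound) (use phi_edge[OF m] N0 s g0 in \<open>auto simp: \<gamma>_def\<close>)
    have r2: "\<bar>rho d a N c z / rho d a N c ?z' - 1\<bar> \<le> 2 * (\<gamma> * real_of_int 1 / real N)"
      unfolding \<gamma>_def by (rule ratio_bound) (use phi_edge[OF m, of N c z] N0 s g0 in \<open>auto simp: \<gamma>_def abs_minus_commute\<close>)
    have sq: "\<And>t. \<bar>t - 1\<bar> \<le> 2 * (\<gamma> * real_of_int 1 / real N) \<Longrightarrow> (1 - t)\<^sup>2 \<le> \<epsilon>"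
    proof -
      fix t :: real assume "\<bar>t - 1\<bar> \<le> 2 * (\<gamma> * real_of_int 1 / real N)"
      then have "\<bar>1 - t\<bar> \<le> 2 * \<gamma> / real N" by simp
      then have "\<bar>1 - t\<bar>\<^sup>2 \<le> (2 * \<gamma> / real N)\<^sup>2" by (intro power_mono) auto
      then show "(1 - t)\<^sup>2 \<le> \<epsilon>" unfolding \<epsilon>_def by simp
    qed
    show "(1 - rho d a N c ?z' / rho d a N c z)\<^sup>2 \<le> \<epsilon> \<and> (1 - rho d a N c z / rho d a N c ?z')\<^sup>2 \<le> \<epsilon>"
      using sq[OF r1] sq[OF r2] by simp
  next
    fix w x y assume w: "w \<in> grid d M'" and x: "x \<in> block d (int N) w" and y: "y \<in> block d (int N) w"
    have "\<gamma> * real_of_int (int d * int N) / real N = real d * \<gamma>" using N0 by simp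
    then have s: "\<gamma> * real_of_int (int d * int N) / real N \<le> 1/2" using gd lb by simp
    have "\<bar>rho d a N c x / rho d a N c y - 1\<bar> \<le> 2 * (\<gamma> * real_of_int (int d * int N) / real N)"
      unfolding \<gamma>_def by (rule ratio_bound) (use phi_block_lip[OF x y] N0 s g0 in \<open>auto simp: \<gamma>_def\<close>)
    then show "\<bar>rho d a N c x / rho d a N c y - 1\<bar> \<le> \<delta>" unfolding \<delta>_def using N0 by (simp add: mult.commute)
  qed simp
  have e1: "(1 / (1 / real L ^ k)\<^sup>2) / (2 ^ d * real N ^ 2) = 1 / (2 ^ d * (real L)\<^sup>2)"
  proof -
    have "1 / (1 / real L ^ k)\<^sup>2 = P\<^sup>2" unfolding P_def by (simp add: power_one_over)
    moreover have "P\<^sup>2 / (2 ^ d * (real L * P)\<^sup>2) = 1 / (2 ^ d * (real L)\<^sup>2)"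
      using P0 by (simp add: power_mult_distrib)
    ultimately show ?thesis unfolding NP by simp
  qed
  have e2: "(1 / (1 / real L ^ k)\<^sup>2) * real d * \<epsilon> = 4 * real d * \<gamma>\<^sup>2 / (real L)\<^sup>2"
  proof -
    have "1 / (1 / real L ^ k)\<^sup>2 = P\<^sup>2" unfolding P_def by (simp add: power_one_over)
    moreover have "P\<^sup>2 * real d * (2 * \<gamma> / (real L * P))\<^sup>2 = 4 * real d * \<gamma>\<^sup>2 / (real L)\<^sup>2"
      using P0 by (simp add: power_mult_distrib power_divide)
    ultimately show ?thesis unfolding \<epsilon>_def NP by simp
  qed
  have Lsq: "(real L)\<^sup>2 > 0" using L2 by simp
  have m1: "l0 / (real L)\<^sup>2 \<le> 1 / (2 ^ d * (real L)\<^sup>2)"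
    using lb(3) Lsq by (simp add: divide_right_mono field_simps)
  have m2: "l0 / (real L)\<^sup>2 \<le> a_seq a L (k+1) / (real L)\<^sup>2"
    using lb(4) as Lsq by (intro divide_right_mono) auto
  have b3: "(a_seq a L (k+1) / (real L)\<^sup>2) * \<delta> \<le> \<delta> / (real L)\<^sup>2"
  proof -
    have "a_seq a L (k+1) \<le> 1" using as a by linarith
    moreover have "\<delta> \<ge> 0" unfolding \<delta>_def using g0 by simp
    ultimately have "a_seq a L (k+1) * \<delta> \<le> \<delta>" using as a by (intro mult_left_le_one_le) auto
    then have "a_seq a L (k+1) * \<delta> / (real L)\<^sup>2 \<le> \<delta> / (real L)\<^sup>2" using Lsq by (intro divide_right_mono) auto
    then show ?thesis by simp
  qed
  have gg: "4 * real d * \<gamma>\<^sup>2 + \<delta> \<le> l0 / 2"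
  proof -
    have "4 * real d * \<gamma>\<^sup>2 = 4 * (real d * \<gamma>) * \<gamma>" by (simp add: power2_eq_square)
    also have "\<dots> \<le> 4 * (l0/12) * (1/24)" unfolding gd using g1 lb by (intro mult_left_mono) auto
    finally have h: "4 * real d * \<gamma>\<^sup>2 \<le> 4 * (l0/12) * (1/24)" .
    show ?thesis unfolding \<delta>_def gd using h lb by linarith
  qed
  have coef: "min ((1 / (1 / real L ^ k)\<^sup>2) / (2 ^ d * real N ^ 2)) (a_seq a L (k+1) / (real L)\<^sup>2)
        - (1 / (1 / real L ^ k)\<^sup>2) * real d * \<epsilon> - (a_seq a L (k+1) / (real L)\<^sup>2) * \<delta> \<ge> l0 / (2 * (real L)\<^sup>2)"
  proof -
    have "l0 / (real L)\<^sup>2 \<le> min ((1 / (1 / real L ^ k)\<^sup>2) / (2 ^ d * real N ^ 2)) (a_seq a L (k+1) / (real L)\<^sup>2)"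
      unfolding e1 using m1 m2 by simp
    moreover have "(4 * real d * \<gamma>\<^sup>2 + \<delta>) / (real L)\<^sup>2 \<le> (l0 / 2) / (real L)\<^sup>2" using gg Lsq by (intro divide_right_mono) auto
    moreover have "l0 / (real L)\<^sup>2 - (l0 / 2) / (real L)\<^sup>2 = l0 / (2 * (real L)\<^sup>2)" by (simp add: field_simps)
    moreover have "(4 * real d * \<gamma>\<^sup>2 + \<delta>) / (real L)\<^sup>2 = 4 * real d * \<gamma>\<^sup>2 / (real L)\<^sup>2 + \<delta> / (real L)\<^sup>2"
      by (rule add_divide_distrib)
    ultimately show ?thesis unfolding e2 using b3 by linarith
  qed
  have Z0: "(\<Sum>x\<in>grid d (L^m). (cmod (complex_of_real (rho d a N c x) * g x))\<^sup>2) \<ge> 0" by (intro sum_nonneg) simp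
  show ?thesis using order_trans[OF mult_right_mono[OF coef Z0] key] unfolding N_def l0_def by simp
qed


definition sc :: "complex \<Rightarrow> ((nat\<Rightarrow>int)\<Rightarrow>complex) \<Rightarrow> ((nat\<Rightarrow>int)\<Rightarrow>complex)" where
  "sc c f = (\<lambda>x. c * f x)"

lemma vs_sc: "vector_space sc"
  by unfold_locales (auto simp: sc_def fun_eq_iff algebra_simps plus_fun_def)

lemma nl_lin: "neumann_lap d e Om (\<lambda>x. c * f x + g x) x = c * neumann_lap d e Om f x + neumann_lap d e Om g x"
proof -
  have "(\<Sum>\<mu><d. (c * f (nbr Om x \<mu> 1) + g (nbr Om x \<mu> 1)) - 2 * (c * f x + g x) + (c * f (nbr Om x \<mu> (-1)) + g (nbr Om x \<mu> (-1))))
     = (\<Sum>\<mu><d. c * (f (nbr Om x \<mu> 1) - 2 * f x + f (nbr Om x \<mu> (-1))) + (g (nbr Om x \<mu> 1) - 2 * g x + g (nbr Om x \<mu> (-1))))"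
    by (intro sum.cong refl) (simp add: algebra_simps)
  also have "\<dots> = c * (\<Sum>\<mu><d. f (nbr Om x \<mu> 1) - 2 * f x + f (nbr Om x \<mu> (-1))) + (\<Sum>\<mu><d. g (nbr Om x \<mu> 1) - 2 * g x + g (nbr Om x \<mu> (-1)))"
    by (rule trans[OF sum.distrib], simp only: sum_distrib_left)
  finally show ?thesis unfolding neumann_lap_def by (simp add: algebra_simps)
qed

lemma Qavg_lin: "Qavg d L j (\<lambda>x. c * f x + g x) y = c * Qavg d L j f y + Qavg d L j g y"
  unfolding Qavg_def by (simp add: sum.distrib sum_distrib_left algebra_simps)

lemma Hop_lin: "Hop d L k m a mu0 (\<lambda>x. c * f x + g x) x = c * Hop d L k m a mu0 f x + Hop d L k m a mu0 g x"
proof -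
  have q: "Qadj L (k+1) (Qavg d L (k+1) (\<lambda>x. c * f x + g x)) x
      = c * Qadj L (k+1) (Qavg d L (k+1) f) x + Qadj L (k+1) (Qavg d L (k+1) g) x"
    unfolding Qadj_def by (simp add: Qavg_lin)
  show ?thesis unfolding Hop_def Let_def q nl_lin by (simp add: algebra_simps)
qed

lemma Hop_zero: "Hop d L k m a mu0 (\<lambda>_. 0) x = 0"
  using Hop_lin[of d L k m a mu0 1 "\<lambda>_. 0" "\<lambda>_. 0" x] by simp

lemma Hop_hom: "module_hom sc sc (Hop d L k m a mu0)"
proof -
  interpret vector_space sc by (rule vs_sc)
  show ?thesis
  proof (unfold_locales)
    fix f g show "Hop d L k m a mu0 (f + g) = Hop d L k m a mu0 f + Hop d L k m a mu0 g"
      using Hop_lin[of d L k m a mu0 1 f g] by (simp add: plus_fun_def fun_eq_iff)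
  next
    fix c f show "Hop d L k m a mu0 (sc c f) = sc c (Hop d L k m a mu0 f)"
      using Hop_lin[of d L k m a mu0 c f "\<lambda>_. 0"] by (simp add: sc_def fun_eq_iff Hop_zero)
  qed
qed

lemma Hop_out: "x \<notin> grid d (L^m) \<Longrightarrow> Hop d L k m a mu0 f x = 0"
  unfolding Hop_def Let_def by simp

lemma surj_from_inj:
  fixes H :: "((nat\<Rightarrow>int)\<Rightarrow>complex) \<Rightarrow> ((nat\<Rightarrow>int)\<Rightarrow>complex)" and S :: "(nat\<Rightarrow>int) set"
  assumes hom: "module_hom sc sc H" and fin: "finite S"
  and into: "\<And>f x. x \<notin> S \<Longrightarrow> H f x = 0"
  and inj0: "\<And>f. (\<forall>x. x \<notin> S \<longrightarrow> f x = 0) \<Longrightarrow> H f = 0 \<Longrightarrow> f = 0"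
  and y: "\<forall>x. x \<notin> S \<longrightarrow> y x = 0"
  shows "y \<in> H ` {f. \<forall>x. x \<notin> S \<longrightarrow> f x = 0}"
proof -
  interpret vs: vector_space sc by (rule vs_sc)
  interpret h: module_hom sc sc H by (rule hom)
  define V where "V = {f::(nat\<Rightarrow>int)\<Rightarrow>complex. \<forall>x. x \<notin> S \<longrightarrow> f x = 0}"
  have subV: "vs.subspace V" unfolding vs.subspace_def V_def by (auto simp: sc_def)
  define T0 where "T0 = (\<lambda>s. \<lambda>x. if x = s then (1::complex) else 0) ` S"
  have fT0: "finite T0" unfolding T0_def using fin by simp
  have VT0: "V \<subseteq> vs.span T0"
  proof
    fix f assume f: "f \<in> V"
    have "f = (\<Sum>s\<in>S. sc (f s) (\<lambda>x. if x = s then 1 else 0))"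
    proof
      fix x
      have "(\<Sum>s\<in>S. sc (f s) (\<lambda>x. if x = s then 1 else 0)) x = (\<Sum>s\<in>S. f s * (if x = s then 1 else 0))"
        unfolding sc_def by (induction S rule: infinite_finite_induct) auto
      also have "\<dots> = f x" using f fin unfolding V_def by (auto simp: if_distrib cong: if_cong)
      finally show "f x = (\<Sum>s\<in>S. sc (f s) (\<lambda>x. if x = s then 1 else 0)) x" by simp
    qed
    also have "\<dots> \<in> vs.span T0"
      by (intro vs.span_sum vs.span_scale vs.span_base) (auto simp: T0_def)
    finally show "f \<in> vs.span T0" .
  qed
  obtain B where B: "B \<subseteq> V" "vs.independent B" "V \<subseteq> vs.span B" "card B = vs.dim V"
    by (rule vs.basis_exists)
  have fB: "finite B" using vs.independent_span_bound[OF fT0 B(2)] B(1) VT0 by blast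
  have spB: "vs.span B \<subseteq> V" using vs.span_minimal[OF B(1) subV] .
  have HV: "\<And>f. H f \<in> V" unfolding V_def using into by auto
  have injV: "inj_on H (vs.span B)"
  proof (rule inj_onI)
    fix f g assume fg: "f \<in> vs.span B" "g \<in> vs.span B" "H f = H g"
    have "f - g \<in> V" using fg spB subV by (auto simp: vs.subspace_diff)
    moreover have "H (f - g) = 0" using fg by (simp add: h.diff)
    ultimately have "f - g = 0" using inj0 unfolding V_def by blast
    then show "f = g" by simp
  qed
  have indH: "vs.independent (H ` B)" by (rule h.independent_injective_image[OF B(2) injV])
  have cardH: "card (H ` B) = card B"
    using card_image[OF inj_on_subset[OF injV vs.span_superset]] .
  have "y \<in> vs.span (H ` B)"
  proof (rule ccontr)
    assume ny: "y \<notin> vs.span (H ` B)"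
    have ind: "vs.independent (insert y (H ` B))" by (rule vs.independent_insertI[OF ny indH])
    have "insert y (H ` B) \<subseteq> vs.span B" using y B(3) HV unfolding V_def by auto
    from vs.independent_span_bound[OF fB ind this] have "card (insert y (H ` B)) \<le> card B" by simp
    moreover have "y \<notin> H ` B" using ny vs.span_superset by blast
    ultimately show False using cardH fB by simp
  qed
  then have "y \<in> H ` vs.span B" by (simp add: h.span_image)
  then show ?thesis using spB unfolding V_def by blast
qed


lemma cs_c: "cmod (\<Sum>x\<in>A. a x * b x) \<le> sqrt (\<Sum>x\<in>A. (cmod (a x))\<^sup>2) * sqrt (\<Sum>x\<in>A. (cmod (b x))\<^sup>2)"
proof -
  have "cmod (\<Sum>x\<in>A. a x * b x) \<le> (\<Sum>x\<in>A. cmod (a x * b x))" by (rule norm_sum)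
  also have "\<dots> = (\<Sum>x\<in>A. \<bar>cmod (a x)\<bar> * \<bar>cmod (b x)\<bar>)" by (simp only: norm_mult abs_norm_cancel)
  also have "\<dots> \<le> L2_set (\<lambda>x. cmod (a x)) A * L2_set (\<lambda>x. cmod (b x)) A" by (rule L2_set_mult_ineq)
  finally show ?thesis unfolding L2_set_def .
qed

lemma sqrt_mult_exp: "sqrt (exp (2 * t) * X) = exp t * sqrt X"
proof -
  have e: "exp (2 * t) = (exp t)\<^sup>2" by (simp only: power2_eq_square exp_add[symmetric] mult_2)
  have "sqrt ((exp t)\<^sup>2) = exp t" by simp
  then show ?thesis unfolding e real_sqrt_mult by simp
qed

lemma rho_pos: "rho d a N c x > 0" unfolding rho_def by simp

lemma rho_lower: assumes "x \<in> block d (int N) w" "N > 0" "gam d a \<ge> 0"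
  shows "rho d a N c x \<ge> exp (gam d a * (\<Sum>\<mu><d. real_of_int \<bar>w \<mu> - c \<mu>\<bar>) - real d * gam d a)"
proof -
  have p: "phi d N c x \<ge> int N * (\<Sum>\<mu><d. \<bar>w \<mu> - c \<mu>\<bar>) - int d * int N" by (rule phi_far_block[OF assms(1)])
  then have "real_of_int (int N * (\<Sum>\<mu><d. \<bar>w \<mu> - c \<mu>\<bar>) - int d * int N) \<le> real_of_int (phi d N c x)"
    by (simp only: of_int_le_iff)
  moreover have "real_of_int (int N * (\<Sum>\<mu><d. \<bar>w \<mu> - c \<mu>\<bar>) - int d * int N) = real N * (\<Sum>\<mu><d. real_of_int \<bar>w \<mu> - c \<mu>\<bar>) - real d * real N"
    by simp
  ultimately have "real_of_int (phi d N c x) \<ge> real N * (\<Sum>\<mu><d. real_of_int \<bar>w \<mu> - c \<mu>\<bar>) - real d * real N"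
    by simp
  then have "gam d a / real N * real_of_int (phi d N c x) \<ge> gam d a / real N * (real N * (\<Sum>\<mu><d. real_of_int \<bar>w \<mu> - c \<mu>\<bar>) - real d * real N)"
    using assms by (intro mult_left_mono) auto
  also have "gam d a / real N * (real N * (\<Sum>\<mu><d. real_of_int \<bar>w \<mu> - c \<mu>\<bar>) - real d * real N)
     = gam d a * (\<Sum>\<mu><d. real_of_int \<bar>w \<mu> - c \<mu>\<bar>) - real d * gam d a"
    using assms by (simp add: field_simps)
  finally show ?thesis unfolding rho_def by simp
qed

lemma rho_upper: assumes "x \<in> block d (int N) c" "N > 0" "gam d a \<ge> 0"
  shows "rho d a N c x \<le> exp (real d * gam d a)"
proof -
  have "phi d N c x \<le> int d * int N" by (rule phi_own_block[OF assms(1)])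
  then have "real_of_int (phi d N c x) \<le> real_of_int (int d * int N)" by (simp only: of_int_le_iff)
  then have "real_of_int (phi d N c x) \<le> real d * real N" by simp
  then have "gam d a / real N * real_of_int (phi d N c x) \<le> gam d a / real N * (real d * real N)"
    using assms by (intro mult_left_mono) auto
  also have "\<dots> = real d * gam d a" using assms by simp
  finally show ?thesis unfolding rho_def by simp
qed

lemma block_sub_grid: assumes "w \<in> grid d (L^(m-(k+1)))" "k + 1 \<le> m" "L > 0"
  shows "block d (int (L^(k+1))) w \<subseteq> grid d (L^m)"
proof -
  have "L^m = L^(k+1) * L^(m-(k+1))" using assms by (metis le_add_diff_inverse power_add)
  then show ?thesis using grid_partition[of "L^(k+1)" d "L^(m-(k+1))"] assms by auto
qed


lemma exp_sq: "(exp t)\<^sup>2 = exp (2 * t)"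
  by (rule exp_double[symmetric])

lemma main_bound:
  fixes f f' :: "(nat\<Rightarrow>int) \<Rightarrow> complex"
  assumes d: "d \<ge> 1" and a: "0 < a" "a \<le> 1" and L: "L > 1" and km: "k + 1 \<le> m" and mu0: "mu0 \<ge> 0"
  and w: "w \<in> grid d (L ^ (m - (k + 1)))" and w': "w' \<in> grid d (L ^ (m - (k + 1)))"
  and fs: "\<forall>x. x \<notin> block d (int (L ^ (k + 1))) w \<longrightarrow> f x = 0"
  and fs': "\<forall>x. x \<notin> block d (int (L ^ (k + 1))) w' \<longrightarrow> f' x = 0"
  shows "cmod (inner_L2 d (1 / real L ^ k) (grid d (L ^ m)) f (Gtilde d L k m a mu0 f'))
        \<le> (2 * exp (2 * real d * gam d a) / lam0 d a) * (real L)\<^sup>2 *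
           exp (- gam d a / real L * (real L ^ (k + 1) * (1 / real L ^ k) *
                 sqrt (\<Sum>\<mu><d. (real_of_int (w \<mu> - w' \<mu>))\<^sup>2)))
           * norm_L2 d (1 / real L ^ k) (grid d (L ^ m)) f
           * norm_L2 d (1 / real L ^ k) (grid d (L ^ m)) f'"
proof -
  define S where "S = grid d (L^m)"
  define V where "V = {f::(nat\<Rightarrow>int)\<Rightarrow>complex. \<forall>x. x \<notin> S \<longrightarrow> f x = 0}"
  define N where "N = L^(k+1)"
  define \<rho> where "\<rho> = rho d a N w'"
  define \<gamma> where "\<gamma> = gam d a"
  define l0 where "l0 = lam0 d a"
  define H where "H = Hop d L k m a mu0"
  define lam where "lam = l0 / (2 * (real L)\<^sup>2)"
  have lb: "0 < l0" "l0 \<le> 1/2" using lam0_bounds[OF a, of d] unfolding l0_def by auto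
  have g0: "\<gamma> > 0" unfolding \<gamma>_def gam_def using lb d l0_def by simp
  have N0: "N > 0" unfolding N_def using L by simp
  have lam0: "lam > 0" unfolding lam_def using lb L by simp
  have rp: "\<And>x. \<rho> x > 0" unfolding \<rho>_def by (rule rho_pos)
  have finS: "finite S" unfolding S_def by (rule finite_grid)
  have bw: "block d (int N) w \<subseteq> S" unfolding S_def N_def using block_sub_grid[OF w km] L by simp
  have bw': "block d (int N) w' \<subseteq> S" unfolding S_def N_def using block_sub_grid[OF w' km] L by simp
  have f'V: "f' \<in> V" unfolding V_def using fs' bw' N_def by auto
  have keyS: "\<And>g. Re (\<Sum>x\<in>S. complex_of_real ((\<rho> x)\<^sup>2) * cnj (g x) * H g x)
      \<ge> lam * (\<Sum>x\<in>S. (cmod (complex_of_real (\<rho> x) * g x))\<^sup>2)"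
    unfolding S_def \<rho>_def H_def lam_def l0_def N_def by (rule key_spec[OF d a L km mu0])
  have inj0: "\<And>g. (\<forall>x. x \<notin> S \<longrightarrow> g x = 0) \<Longrightarrow> H g = 0 \<Longrightarrow> g = 0"
  proof -
    fix g :: "(nat\<Rightarrow>int)\<Rightarrow>complex" assume gV: "\<forall>x. x \<notin> S \<longrightarrow> g x = 0" and Hg: "H g = 0"
    have "lam * (\<Sum>x\<in>S. (cmod (complex_of_real (\<rho> x) * g x))\<^sup>2) \<le> 0"
      using keyS[of g] Hg by simp
    then have "(\<Sum>x\<in>S. (cmod (complex_of_real (\<rho> x) * g x))\<^sup>2) \<le> 0" using lam0
      by (simp add: mult_le_0_iff)
    then have "(\<Sum>x\<in>S. (cmod (complex_of_real (\<rho> x) * g x))\<^sup>2) = 0"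
      by (meson order_antisym sum_nonneg zero_le_power2)
    then have "\<forall>x\<in>S. (cmod (complex_of_real (\<rho> x) * g x))\<^sup>2 = 0"
      using sum_nonneg_eq_0_iff[OF finS, where f="\<lambda>x. (cmod (complex_of_real (\<rho> x) * g x))\<^sup>2"] by simp
    then have "\<forall>x\<in>S. g x = 0" using rp by (simp add: norm_mult) (metis less_irrefl)
    then show "g = 0" using gV by (auto simp: fun_eq_iff)
  qed
  have surj: "f' \<in> H ` V" unfolding V_def
    by (rule surj_from_inj[OF _ finS _ inj0]) (use f'V in \<open>auto simp: V_def H_def S_def Hop_hom Hop_out\<close>)
  define g where "g = Gtilde d L k m a mu0 f'"
  have gdef: "g = inv_into V H f'" unfolding g_def Gtilde_def V_def H_def S_def ..
  have gV: "g \<in> V" unfolding gdef by (rule inv_into_into[OF surj])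
  have Hg: "H g = f'" unfolding gdef by (rule f_inv_into_f[OF surj])
  define Z where "Z = (\<Sum>x\<in>S. (cmod (complex_of_real (\<rho> x) * g x))\<^sup>2)"
  define W' where "W' = (\<Sum>x\<in>S. (cmod (complex_of_real (\<rho> x) * f' x))\<^sup>2)"
  define F where "F = (\<Sum>x\<in>S. (cmod (f x))\<^sup>2)"
  define F' where "F' = (\<Sum>x\<in>S. (cmod (f' x))\<^sup>2)"
  define l1 where "l1 = (\<Sum>\<mu><d. real_of_int \<bar>w \<mu> - w' \<mu>\<bar>)"
  have Z0: "Z \<ge> 0" unfolding Z_def by (intro sum_nonneg) simp
  have W0: "W' \<ge> 0" unfolding W'_def by (intro sum_nonneg) simp
  have F0: "F \<ge> 0" unfolding F_def by (intro sum_nonneg) simp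
  have F0': "F' \<ge> 0" unfolding F'_def by (intro sum_nonneg) simp
  have "lam * Z \<le> Re (\<Sum>x\<in>S. complex_of_real ((\<rho> x)\<^sup>2) * cnj (g x) * f' x)"
    using keyS[of g] unfolding Hg Z_def .
  also have "\<dots> \<le> cmod (\<Sum>x\<in>S. complex_of_real ((\<rho> x)\<^sup>2) * cnj (g x) * f' x)" by (rule complex_Re_le_cmod)
  also have "(\<Sum>x\<in>S. complex_of_real ((\<rho> x)\<^sup>2) * cnj (g x) * f' x)
      = (\<Sum>x\<in>S. cnj (complex_of_real (\<rho> x) * g x) * (complex_of_real (\<rho> x) * f' x))"
    by (intro sum.cong refl) (simp add: power2_eq_square algebra_simps)
  also have "cmod \<dots> \<le> sqrt Z * sqrt W'"
    using cs_c[of "\<lambda>x. cnj (complex_of_real (\<rho> x) * g x)" "\<lambda>x. complex_of_real (\<rho> x) * f' x" S]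
    unfolding Z_def W'_def by (simp only: complex_mod_cnj)
  finally have lz: "lam * Z \<le> sqrt Z * sqrt W'" .
  have sZ: "sqrt Z \<le> sqrt W' / lam"
  proof (cases "Z = 0")
    case True then show ?thesis using W0 lam0 by simp
  next
    case False
    then have pz: "sqrt Z > 0" using Z0 by simp
    have "lam * sqrt Z * sqrt Z \<le> sqrt W' * sqrt Z" using lz Z0 by (simp add: algebra_simps)
    then have "lam * sqrt Z \<le> sqrt W'" using pz by simp
    then show ?thesis using lam0 by (simp add: field_simps)
  qed
  have "(\<Sum>x\<in>S. cnj (f x) * g x) = (\<Sum>x\<in>S. (cnj (f x) / complex_of_real (\<rho> x)) * (complex_of_real (\<rho> x) * g x))"
  proof (intro sum.cong refl)
    fix x have "\<rho> x \<noteq> 0" using rp[of x] by simp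
    then show "cnj (f x) * g x = (cnj (f x) / complex_of_real (\<rho> x)) * (complex_of_real (\<rho> x) * g x)" by simp
  qed
  then have s5: "cmod (\<Sum>x\<in>S. cnj (f x) * g x) \<le> sqrt (\<Sum>x\<in>S. (cmod (f x) / \<rho> x)\<^sup>2) * sqrt Z"
    using cs_c[of "\<lambda>x. cnj (f x) / complex_of_real (\<rho> x)" "\<lambda>x. complex_of_real (\<rho> x) * g x" S]
    unfolding Z_def using rp by (simp add: norm_divide abs_of_pos)
  have s6: "(\<Sum>x\<in>S. (cmod (f x) / \<rho> x)\<^sup>2) \<le> exp (2 * (real d * \<gamma> - \<gamma> * l1)) * F"
    unfolding F_def sum_distrib_left
  proof (intro sum_mono)
    fix x assume "x \<in> S"
    show "(cmod (f x) / \<rho> x)\<^sup>2 \<le> exp (2 * (real d * \<gamma> - \<gamma> * l1)) * (cmod (f x))\<^sup>2"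
    proof (cases "x \<in> block d (int N) w")
      case True
      have lo: "\<rho> x \<ge> exp (\<gamma> * l1 - real d * \<gamma>)" unfolding \<rho>_def \<gamma>_def l1_def
        by (rule rho_lower[OF True N0]) (use g0 \<gamma>_def in simp)
      have "1 / \<rho> x \<le> 1 / exp (\<gamma> * l1 - real d * \<gamma>)"
        by (rule divide_left_mono[OF lo]) (simp_all add: mult_pos_pos rp)
      also have "\<dots> = exp (real d * \<gamma> - \<gamma> * l1)" by (simp add: exp_diff)
      finally have "1 / \<rho> x \<le> exp (real d * \<gamma> - \<gamma> * l1)" .
      then have "(1 / \<rho> x)\<^sup>2 \<le> (exp (real d * \<gamma> - \<gamma> * l1))\<^sup>2" using rp[of x] by (intro power_mono) auto
      also have "\<dots> = exp (2 * (real d * \<gamma> - \<gamma> * l1))" by (rule exp_sq)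
      finally have "(1 / \<rho> x)\<^sup>2 \<le> exp (2 * (real d * \<gamma> - \<gamma> * l1))" .
      then have "(1 / \<rho> x)\<^sup>2 * (cmod (f x))\<^sup>2 \<le> exp (2 * (real d * \<gamma> - \<gamma> * l1)) * (cmod (f x))\<^sup>2"
        by (intro mult_right_mono) auto
      then show ?thesis by (simp add: power_divide)
    next
      case False then show ?thesis using fs N_def by simp
    qed
  qed
  have s7: "W' \<le> exp (2 * (real d * \<gamma>)) * F'"
    unfolding W'_def F'_def sum_distrib_left
  proof (intro sum_mono)
    fix x assume "x \<in> S"
    show "(cmod (complex_of_real (\<rho> x) * f' x))\<^sup>2 \<le> exp (2 * (real d * \<gamma>)) * (cmod (f' x))\<^sup>2"
    proof (cases "x \<in> block d (int N) w'")
      case True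
      have up: "\<rho> x \<le> exp (real d * \<gamma>)" unfolding \<rho>_def \<gamma>_def
        by (rule rho_upper[OF True N0]) (use g0 \<gamma>_def in simp)
      then have "(\<rho> x)\<^sup>2 \<le> (exp (real d * \<gamma>))\<^sup>2" using rp[of x] by (intro power_mono) auto
      also have "\<dots> = exp (2 * (real d * \<gamma>))" by (rule exp_sq)
      finally have "(\<rho> x)\<^sup>2 * (cmod (f' x))\<^sup>2 \<le> exp (2 * (real d * \<gamma>)) * (cmod (f' x))\<^sup>2"
        by (intro mult_right_mono) auto
      then show ?thesis using rp[of x] by (simp add: norm_mult power_mult_distrib)
    next
      case False then show ?thesis using fs' N_def by simp
    qed
  qed
  define t1 where "t1 = real d * \<gamma> - \<gamma> * l1"
  define t2 where "t2 = real d * \<gamma>"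
  have A: "sqrt (\<Sum>x\<in>S. (cmod (f x) / \<rho> x)\<^sup>2) \<le> sqrt (exp (2 * t1) * F)" using s6 unfolding t1_def by simp
  have "sqrt W' / lam \<le> sqrt (exp (2 * t2) * F') / lam"
    using s7 lam0 unfolding t2_def by (intro divide_right_mono) auto
  then have Q: "sqrt Z \<le> sqrt (exp (2 * t2) * F') / lam" using sZ by linarith
  have "cmod (\<Sum>x\<in>S. cnj (f x) * g x) \<le> sqrt (exp (2 * t1) * F) * (sqrt (exp (2 * t2) * F') / lam)"
  proof -
    have "sqrt (\<Sum>x\<in>S. (cmod (f x) / \<rho> x)\<^sup>2) * sqrt Z \<le> sqrt (exp (2 * t1) * F) * (sqrt (exp (2 * t2) * F') / lam)"
      using A Q Z0 F0 by (intro mult_mono) auto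
    then show ?thesis using s5 by linarith
  qed
  also have "\<dots> = (exp t1 * exp t2) * sqrt F * sqrt F' / lam" by (simp add: sqrt_mult_exp)
  also have "exp t1 * exp t2 = exp (2 * real d * \<gamma>) * exp (- \<gamma> * l1)"
  proof -
    have "exp t1 * exp t2 = exp (t1 + t2)" by (simp add: exp_add)
    also have "t1 + t2 = 2 * real d * \<gamma> + - \<gamma> * l1" unfolding t1_def t2_def by simp
    finally show ?thesis by (simp add: exp_diff exp_minus divide_inverse)
  qed
  also have "exp (2 * real d * \<gamma>) * exp (- \<gamma> * l1) * sqrt F * sqrt F' / lam
     = (2 * exp (2 * real d * \<gamma>) / l0) * (real L)\<^sup>2 * exp (- \<gamma> * l1) * sqrt F * sqrt F'"
    unfolding lam_def using lb by (simp add: field_simps)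
  finally have core: "cmod (\<Sum>x\<in>S. cnj (f x) * g x) \<le> (2 * exp (2 * real d * \<gamma>) / l0) * (real L)\<^sup>2 * exp (- \<gamma> * l1) * sqrt F * sqrt F'" .
  define \<eta> where "\<eta> = 1 / real L ^ k"
  have eta0: "\<eta> > 0" unfolding \<eta>_def using L by simp
  have l2: "sqrt (\<Sum>\<mu><d. (real_of_int (w \<mu> - w' \<mu>))\<^sup>2) \<le> l1"
    using L2_set_le_sum_abs[of "\<lambda>\<mu>. real_of_int (w \<mu> - w' \<mu>)" "{..<d}"] unfolding L2_set_def l1_def by simp
  have ex: "- \<gamma> / real L * (real L ^ (k + 1) * (1 / real L ^ k) * sqrt (\<Sum>\<mu><d. (real_of_int (w \<mu> - w' \<mu>))\<^sup>2))
      = - \<gamma> * sqrt (\<Sum>\<mu><d. (real_of_int (w \<mu> - w' \<mu>))\<^sup>2)" using L by simp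
  have exm: "exp (- \<gamma> * l1) \<le> exp (- \<gamma> * sqrt (\<Sum>\<mu><d. (real_of_int (w \<mu> - w' \<mu>))\<^sup>2))"
    using l2 g0 by simp
  have inner: "cmod (inner_L2 d \<eta> S f g) = \<eta> ^ d * cmod (\<Sum>x\<in>S. cnj (f x) * g x)"
    unfolding inner_L2_def using eta0 by (simp add: norm_mult norm_power)
  have nf: "norm_L2 d \<eta> S f * norm_L2 d \<eta> S f' = \<eta> ^ d * (sqrt F * sqrt F')"
    unfolding norm_L2_def F_def F'_def using eta0 by (simp add: real_sqrt_mult)
  have C0: "(2 * exp (2 * real d * \<gamma>) / l0) * (real L)\<^sup>2 \<ge> 0" using lb by simp
  have "cmod (inner_L2 d \<eta> S f g) \<le> \<eta> ^ d * ((2 * exp (2 * real d * \<gamma>) / l0) * (real L)\<^sup>2 * exp (- \<gamma> * l1) * sqrt F * sqrt F')"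
    unfolding inner using core eta0 by (intro mult_left_mono) auto
  also have "\<dots> \<le> \<eta> ^ d * ((2 * exp (2 * real d * \<gamma>) / l0) * (real L)\<^sup>2 * exp (- \<gamma> * sqrt (\<Sum>\<mu><d. (real_of_int (w \<mu> - w' \<mu>))\<^sup>2)) * sqrt F * sqrt F')"
    using exm C0 F0 F0' eta0 by (intro mult_left_mono mult_right_mono) auto
  also have "\<dots> = (2 * exp (2 * real d * \<gamma>) / l0) * (real L)\<^sup>2 * exp (- \<gamma> * sqrt (\<Sum>\<mu><d. (real_of_int (w \<mu> - w' \<mu>))\<^sup>2))
      * (norm_L2 d \<eta> S f * norm_L2 d \<eta> S f')"
    unfolding nf by (simp add: algebra_simps)
  also have "\<dots> = (2 * exp (2 * real d * \<gamma>) / l0) * (real L)\<^sup>2 * exp (- \<gamma> * sqrt (\<Sum>\<mu><d. (real_of_int (w \<mu> - w' \<mu>))\<^sup>2))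
      * norm_L2 d \<eta> S f * norm_L2 d \<eta> S f'" by (simp only: mult.assoc)
  finally show ?thesis unfolding ex[unfolded \<gamma>_def, symmetric] \<eta>_def S_def g_def \<gamma>_def l0_def .
qed


theorem mainTheorem4:
  fixes d :: nat and a :: real
  assumes "d \<ge> 1" and "0 < a" and "a \<le> 1"
  shows "\<exists>c c1 :: real. c > 0 \<and> c1 > 0 \<and>
    (\<forall>(L::nat) (k::nat) (m::nat) (mu0::real) (w::nat \<Rightarrow> int) (w'::nat \<Rightarrow> int)
       (f::(nat \<Rightarrow> int) \<Rightarrow> complex) (f'::(nat \<Rightarrow> int) \<Rightarrow> complex).
      odd L \<and> L > 1 \<and> k \<ge> 1 \<and> m \<ge> k + 1 \<and> mu0 \<ge> 0 \<and>
      w \<in> grid d (L ^ (m - (k + 1))) \<and> w' \<in> grid d (L ^ (m - (k + 1))) \<and>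
      (\<forall>x. x \<notin> block d (int (L ^ (k + 1))) w \<longrightarrow> f x = 0) \<and>
      (\<forall>x. x \<notin> block d (int (L ^ (k + 1))) w' \<longrightarrow> f' x = 0) \<longrightarrow>
      cmod (inner_L2 d (1 / real L ^ k) (grid d (L ^ m)) f (Gtilde d L k m a mu0 f'))
        \<le> c * (real L)\<^sup>2 *
           exp (- c1 / real L * (real L ^ (k + 1) * (1 / real L ^ k) *
                 sqrt (\<Sum>\<mu><d. (real_of_int (w \<mu> - w' \<mu>))\<^sup>2)))
           * norm_L2 d (1 / real L ^ k) (grid d (L ^ m)) f
           * norm_L2 d (1 / real L ^ k) (grid d (L ^ m)) f')"
proof -
  have l: "0 < lam0 d a" using lam0_bounds[OF assms(2,3), of d] by auto
  have g: "0 < gam d a" unfolding gam_def using l assms(1) by simp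
  show ?thesis
  proof (rule exI[where x="2 * exp (2 * real d * gam d a) / lam0 d a"], rule exI[where x="gam d a"], intro conjI allI impI)
    show "0 < 2 * exp (2 * real d * gam d a) / lam0 d a" using l by simp
    show "0 < gam d a" by (rule g)
  next
    fix L k m :: nat and mu0 :: real and w w' :: "nat \<Rightarrow> int" and f f' :: "(nat \<Rightarrow> int) \<Rightarrow> complex"
    assume H: "odd L \<and> L > 1 \<and> k \<ge> 1 \<and> m \<ge> k + 1 \<and> mu0 \<ge> 0 \<and>
      w \<in> grid d (L ^ (m - (k + 1))) \<and> w' \<in> grid d (L ^ (m - (k + 1))) \<and>
      (\<forall>x. x \<notin> block d (int (L ^ (k + 1))) w \<longrightarrow> f x = 0) \<and>
      (\<forall>x. x \<notin> block d (int (L ^ (k + 1))) w' \<longrightarrow> f' x = 0)"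
    show "cmod (inner_L2 d (1 / real L ^ k) (grid d (L ^ m)) f (Gtilde d L k m a mu0 f'))
        \<le> 2 * exp (2 * real d * gam d a) / lam0 d a * (real L)\<^sup>2 *
           exp (- gam d a / real L * (real L ^ (k + 1) * (1 / real L ^ k) *
                 sqrt (\<Sum>\<mu><d. (real_of_int (w \<mu> - w' \<mu>))\<^sup>2)))
           * norm_L2 d (1 / real L ^ k) (grid d (L ^ m)) f
           * norm_L2 d (1 / real L ^ k) (grid d (L ^ m)) f'"
      using main_bound[OF assms(1,2,3)] H by blast
  qed
qed

end
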